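(* Let $(\mathbf W^B,\mathbf W^E)=(\{W^{B,n}\},\{W^{E,n}\})$ be a general sequence of wire-tap channels, $W^{B,n}$ from $\mathcal X^n$ to $\mathcal Y^n$ and $W^{E,n}$ from $\mathcal X^n$ to $\mathcal Z^n$. For every sequence $\mathbf p=\{p^n\}$ of input distributions, $$C_d(\mathbf W^B,\mathbf W^E)\ge\underline I(1|\mathbf p,\mathbf W^B)-\overline I(0|\mathbf p,\mathbf W^E).$$ If furthermore $|\mathcal Z^n|=d^n$ for a fixed positive integer $d$, then $$C_I(\mathbf W^B,\mathbf W^E)\ge\underline I(1|\mathbf p,\mathbf W^B)-\overline I(0|\mathbf p,\mathbf W^E).$$
   Context: Channels are maps $x\mapsto W_x$ into probability distributions on a finite or countable output set; $W_p(y)=\sum_xp(x)W_x(y)$. A wire-tap code $\Phi=(M,\{Q_i\}_{i=1}^M,\{\mathcal D_i\}_{i=1}^M)$ for a pair $(W^B,W^E)$ consists of input distributions $Q_i$ and pairwise disjoint subsets $\mathcal D_i$ of the main receiver's output set; $|\Phi|=M$, $\epsilon_B(\Phi)=\frac1M\sum_iW^B_{Q_i}(\mathcal D_i^c)$, $I_E(\Phi)=\sum_i\frac1MD(W^E_{Q_i}\|W^E_\Phi)$ with $W^E_\Phi=\frac1M\sum_iW^E_{Q_i}$, and $d_E(\Phi)=\frac1{M(M-1)}\sum_{i\ne j}\sum_z|W^E_{Q_i}(z)-W^E_{Q_j}(z)|$. Capacities: $C_d(\mathbf W^B,\mathbf W^E):=\sup\{\liminf_n\frac1n\log|\Phi_n|\}$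 over sequences of wire-tap codes $\Phi_n$ for $(W^{B,n},W^{E,n})$ with $\epsilon_B(\Phi_n)\to0$ and $d_E(\Phi_n)\to0$; $C_I$ is the same with $d_E(\Phi_n)\to0$ replaced by $I_E(\Phi_n)/n\to0$. For a sequence of channels $\mathbf W=\{W^n\}$ and $\mathbf p=\{p^n\}$: $\overline I(\epsilon|\mathbf p,\mathbf W):=\inf\{a:\limsup_n\mathrm{E}_{p^n}W^n_x\{y:\frac1n\log\frac{W^n_x(y)}{W^n_{p^n}(y)}>a\}\le\epsilon\}$, $\underline I(\epsilon|\mathbf p,\mathbf W):=\inf\{a:\liminf_n\mathrm{E}_{p^n}W^n_x\{y:\frac1n\log\frac{W^n_x(y)}{W^n_{p^n}(y)}>a\}\le\epsilon\}$, where for $\epsilon=1$ "$\le\epsilon$" is replaced by "$<1$". *)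

theory Defs
  imports "HOL-Probability.Probability"
begin

text \<open>Logarithms are natural (ln),
  used consistently for rates and information densities.\<close>

definition out_dist :: "('x \<Rightarrow> 'y pmf) \<Rightarrow> 'x pmf \<Rightarrow> 'y pmf" where
  "out_dist W p = bind_pmf p W"

record ('x, 'y) wtcode =
  cM :: nat
  cQ :: "nat \<Rightarrow> 'x pmf"
  cD :: "nat \<Rightarrow> 'y set"

definition valid_code :: "('x, 'y) wtcode \<Rightarrow> bool" where
  "valid_code \<Phi> \<longleftrightarrow> cM \<Phi> \<ge> 1 \<and>
     (\<forall>i<cM \<Phi>. \<forall>j<cM \<Phi>. i \<noteq> j \<longrightarrow> cD \<Phi> i \<inter> cD \<Phi> j = {})"

definition eps_B :: "('x \<Rightarrow> 'y pmf) \<Rightarrow> ('x, 'y) wtcode \<Rightarrow> real" where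
  "eps_B W \<Phi> = (1 / real (cM \<Phi>)) *
     (\<Sum>i<cM \<Phi>. measure_pmf.prob (out_dist W (cQ \<Phi> i)) (- cD \<Phi> i))"

definition eve_mix :: "('x \<Rightarrow> 'z pmf) \<Rightarrow> ('x, 'y) wtcode \<Rightarrow> 'z \<Rightarrow> real" where
  "eve_mix W \<Phi> z = (1 / real (cM \<Phi>)) * (\<Sum>i<cM \<Phi>. pmf (out_dist W (cQ \<Phi> i)) z)"

definition kl_div :: "'a pmf \<Rightarrow> ('a \<Rightarrow> real) \<Rightarrow> real" where
  "kl_div P R = (\<Sum>\<^sub>\<infinity>z. pmf P z * ln (pmf P z / R z))"

definition I_E :: "('x \<Rightarrow> 'z pmf) \<Rightarrow> ('x, 'y) wtcode \<Rightarrow> real" where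
  "I_E W \<Phi> = (\<Sum>i<cM \<Phi>. (1 / real (cM \<Phi>)) * kl_div (out_dist W (cQ \<Phi> i)) (eve_mix W \<Phi>))"

definition d_E :: "('x \<Rightarrow> 'z pmf) \<Rightarrow> ('x, 'y) wtcode \<Rightarrow> real" where
  "d_E W \<Phi> = (1 / (real (cM \<Phi>) * (real (cM \<Phi>) - 1))) *
     (\<Sum>i<cM \<Phi>. \<Sum>j\<in>{..<cM \<Phi>} - {i}.
        (\<Sum>\<^sub>\<infinity>z. \<bar>pmf (out_dist W (cQ \<Phi> i)) z - pmf (out_dist W (cQ \<Phi> j)) z\<bar>))"

definition C_d :: "(nat \<Rightarrow> 'x \<Rightarrow> 'y pmf) \<Rightarrow> (nat \<Rightarrow> 'x \<Rightarrow> 'z pmf) \<Rightarrow> ereal" where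
  "C_d WB WE = Sup {liminf (\<lambda>n. ereal (ln (real (cM (\<Phi> n))) / real n)) | \<Phi>.
      (\<forall>n. valid_code (\<Phi> n)) \<and>
      (\<lambda>n. eps_B (WB n) (\<Phi> n)) \<longlonglongrightarrow> 0 \<and>
      (\<lambda>n. d_E (WE n) (\<Phi> n)) \<longlonglongrightarrow> 0}"

definition C_I :: "(nat \<Rightarrow> 'x \<Rightarrow> 'y pmf) \<Rightarrow> (nat \<Rightarrow> 'x \<Rightarrow> 'z pmf) \<Rightarrow> ereal" where
  "C_I WB WE = Sup {liminf (\<lambda>n. ereal (ln (real (cM (\<Phi> n))) / real n)) | \<Phi>.
      (\<forall>n. valid_code (\<Phi> n)) \<and>
      (\<lambda>n. eps_B (WB n) (\<Phi> n)) \<longlonglongrightarrow> 0 \<and>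
      (\<lambda>n. I_E (WE n) (\<Phi> n) / real n) \<longlonglongrightarrow> 0}"

definition spec_F :: "(nat \<Rightarrow> 'x \<Rightarrow> 'y pmf) \<Rightarrow> (nat \<Rightarrow> 'x pmf) \<Rightarrow> nat \<Rightarrow> real \<Rightarrow> real" where
  "spec_F W p n a = measure_pmf.prob
      (bind_pmf (p n) (\<lambda>x. map_pmf (\<lambda>y. (x, y)) (W n x)))
      {(x, y). ln (pmf (W n x) y / pmf (out_dist (W n) (p n)) y) / real n > a}"

definition I_sup :: "real \<Rightarrow> (nat \<Rightarrow> 'x pmf) \<Rightarrow> (nat \<Rightarrow> 'x \<Rightarrow> 'y pmf) \<Rightarrow> ereal" where
  "I_sup \<epsilon> p W = Inf {ereal a | a.
     (if \<epsilon> = 1 then limsup (\<lambda>n. ereal (spec_F W p n a)) < 1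
      else limsup (\<lambda>n. ereal (spec_F W p n a)) \<le> ereal \<epsilon>)}"

definition I_inf :: "real \<Rightarrow> (nat \<Rightarrow> 'x pmf) \<Rightarrow> (nat \<Rightarrow> 'x \<Rightarrow> 'y pmf) \<Rightarrow> ereal" where
  "I_inf \<epsilon> p W = Inf {ereal a | a.
     (if \<epsilon> = 1 then liminf (\<lambda>n. ereal (spec_F W p n a)) < 1
      else liminf (\<lambda>n. ereal (spec_F W p n a)) \<le> ereal \<epsilon>)}"

end

theory Submission
  imports Defs "HOL-Real_Asymp.Real_Asymp"
begin

lemma pmf_integrable_bounded:
  fixes f :: "'a \<Rightarrow> real"
  assumes "\<And>x. \<bar>f x\<bar> \<le> B"
  shows "integrable (measure_pmf M) f"
  by (rule measure_pmf.integrable_const_bound[where B=B]) (use assms in auto)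

lemma pmf_exp_nn:
  fixes f :: "'a \<Rightarrow> real"
  assumes "\<And>x. 0 \<le> f x" "\<And>x. f x \<le> B"
  shows "ennreal (measure_pmf.expectation M f) = (\<integral>\<^sup>+x. ennreal (f x) \<partial>measure_pmf M)"
proof -
  have "integrable (measure_pmf M) f"
    by (rule pmf_integrable_bounded[where B=B]) (use assms in \<open>auto simp: abs_le_iff intro: order_trans[OF _ assms(2)]\<close>)
  then show ?thesis by (subst nn_integral_eq_integral) (use assms in auto)
qed

lemma pmf_exp_nonneg_le:
  fixes f :: "'a \<Rightarrow> real"
  assumes "\<And>x. 0 \<le> f x" "\<And>x. f x \<le> B"
  shows "0 \<le> measure_pmf.expectation M f" "measure_pmf.expectation M f \<le> B"
proof -
  show "0 \<le> measure_pmf.expectation M f" using assms by (simp add: integral_nonneg_AE)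
  have "integrable (measure_pmf M) f"
    by (rule pmf_integrable_bounded[where B=B]) (use assms in \<open>auto simp: abs_le_iff intro: order_trans[OF _ assms(2)]\<close>)
  then have "measure_pmf.expectation M f \<le> measure_pmf.expectation M (\<lambda>_. B)"
    by (intro integral_mono) (use assms in auto)
  then show "measure_pmf.expectation M f \<le> B" by simp
qed

lemma exp_bind_nonneg:
  fixes g :: "'b \<Rightarrow> real"
  assumes "\<And>x. 0 \<le> g x" "\<And>x. g x \<le> B"
  shows "measure_pmf.expectation (bind_pmf A f) g = measure_pmf.expectation A (\<lambda>a. measure_pmf.expectation (f a) g)"
proof -
  have B: "0 \<le> B" using assms(1)[of undefined] assms(2)[of undefined] by simp
  have i0: "\<And>a. 0 \<le> measure_pmf.expectation (f a) g" "\<And>a. measure_pmf.expectation (f a) g \<le> B"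
    by (rule pmf_exp_nonneg_le[OF assms])+
  have "ennreal (measure_pmf.expectation (bind_pmf A f) g) = (\<integral>\<^sup>+x. ennreal (g x) \<partial>measure_pmf (bind_pmf A f))"
    by (rule pmf_exp_nn[OF assms])
  also have "\<dots> = (\<integral>\<^sup>+a. \<integral>\<^sup>+x. ennreal (g x) \<partial>f a \<partial>A)" by simp
  also have "\<dots> = (\<integral>\<^sup>+a. ennreal (measure_pmf.expectation (f a) g) \<partial>A)"
    by (subst pmf_exp_nn[OF assms]) rule
  also have "\<dots> = ennreal (measure_pmf.expectation A (\<lambda>a. measure_pmf.expectation (f a) g))"
    by (rule pmf_exp_nn[symmetric, OF i0])
  finally show ?thesis
    by (subst (asm) ennreal_inj) (use i0 pmf_exp_nonneg_le[OF assms] in \<open>auto intro: integral_nonneg_AE\<close>)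
qed

lemma exp_bind:
  fixes g :: "'b \<Rightarrow> real"
  assumes "\<And>x. \<bar>g x\<bar> \<le> B"
  shows "measure_pmf.expectation (bind_pmf A f) g = measure_pmf.expectation A (\<lambda>a. measure_pmf.expectation (f a) g)"
proof -
  have int: "\<And>M. integrable (measure_pmf M) g" by (rule pmf_integrable_bounded[OF assms])
  have h: "measure_pmf.expectation (bind_pmf A f) (\<lambda>x. g x + B) = measure_pmf.expectation A (\<lambda>a. measure_pmf.expectation (f a) (\<lambda>x. g x + B))"
  proof (rule exp_bind_nonneg[where B="2*B"])
    fix x show "0 \<le> g x + B" "g x + B \<le> 2 * B" using assms[of x] by (auto simp: abs_le_iff)
  qed
  have e: "\<And>M. measure_pmf.expectation M (\<lambda>x. g x + B) = measure_pmf.expectation M g + B"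
    using int by (simp add: Bochner_Integration.integral_add)
  have int2: "integrable (measure_pmf A) (\<lambda>a. measure_pmf.expectation (f a) g)"
  proof (rule pmf_integrable_bounded[where B=B])
    fix a
    have "\<bar>measure_pmf.expectation (f a) g\<bar> \<le> measure_pmf.expectation (f a) (\<lambda>x. \<bar>g x\<bar>)"
      by (rule integral_abs_bound)
    also have "\<dots> \<le> B" using pmf_exp_nonneg_le(2)[of "\<lambda>x. \<bar>g x\<bar>" B] assms by auto
    finally show "\<bar>measure_pmf.expectation (f a) g\<bar> \<le> B" .
  qed
  from h show ?thesis unfolding e using int2 by (simp add: Bochner_Integration.integral_add)
qed

lemma exp_swap_nonneg:
  fixes F :: "'a \<Rightarrow> 'b \<Rightarrow> real"
  assumes "\<And>a b. 0 \<le> F a b" "\<And>a b. F a b \<le> B"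
  shows "measure_pmf.expectation A (\<lambda>a. measure_pmf.expectation C (\<lambda>b. F a b)) =
         measure_pmf.expectation C (\<lambda>b. measure_pmf.expectation A (\<lambda>a. F a b))"
proof -
  have i1: "\<And>a. 0 \<le> measure_pmf.expectation C (\<lambda>b. F a b)" "\<And>a. measure_pmf.expectation C (\<lambda>b. F a b) \<le> B"
    by (rule pmf_exp_nonneg_le[of "\<lambda>b. F _ b" B], use assms in auto)+
  have i2: "\<And>b. 0 \<le> measure_pmf.expectation A (\<lambda>a. F a b)" "\<And>b. measure_pmf.expectation A (\<lambda>a. F a b) \<le> B"
    by (rule pmf_exp_nonneg_le[of "\<lambda>a. F a _" B], use assms in auto)+
  have "ennreal (measure_pmf.expectation A (\<lambda>a. measure_pmf.expectation C (\<lambda>b. F a b))) =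
        (\<integral>\<^sup>+a. \<integral>\<^sup>+b. ennreal (F a b) \<partial>C \<partial>A)"
    by (subst pmf_exp_nn[OF i1]) (subst pmf_exp_nn[OF assms], rule)
  also have "\<dots> = (\<integral>\<^sup>+x. ennreal (F (fst x) (snd x)) \<partial>pair_pmf A C)"
    by (simp add: nn_integral_pair_pmf')
  also have "\<dots> = (\<integral>\<^sup>+x. ennreal (F (snd x) (fst x)) \<partial>pair_pmf C A)"
    by (subst pair_commute_pmf) (simp add: case_prod_unfold)
  also have "\<dots> = (\<integral>\<^sup>+b. \<integral>\<^sup>+a. ennreal (F a b) \<partial>A \<partial>C)"
    by (simp add: nn_integral_pair_pmf')
  also have "\<dots> = ennreal (measure_pmf.expectation C (\<lambda>b. measure_pmf.expectation A (\<lambda>a. F a b)))"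
    by (subst pmf_exp_nn[OF i2]) (subst pmf_exp_nn[OF assms], rule)
  finally show ?thesis
    by (subst (asm) ennreal_inj) (use i1 i2 in \<open>auto intro: integral_nonneg_AE\<close>)
qed

lemma exp_pair_mult:
  fixes f g :: "'a \<Rightarrow> real"
  assumes "\<And>x. 0 \<le> f x" "\<And>x. f x \<le> B" "\<And>x. 0 \<le> g x" "\<And>x. g x \<le> B"
  shows "measure_pmf.expectation (pair_pmf A C) (\<lambda>x. f (fst x) * g (snd x)) =
         measure_pmf.expectation A f * measure_pmf.expectation C g"
proof -
  have B: "0 \<le> B" using assms(1)[of undefined] assms(2)[of undefined] by simp
  have ff: "\<And>x. 0 \<le> f (fst x) * g (snd x)" "\<And>x. f (fst x) * g (snd x) \<le> B * B"
    using assms mult_mono[OF assms(2) assms(4) B assms(3)] by auto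
  have "ennreal (measure_pmf.expectation (pair_pmf A C) (\<lambda>x. f (fst x) * g (snd x))) =
        (\<integral>\<^sup>+a. \<integral>\<^sup>+b. ennreal (f a) * ennreal (g b) \<partial>C \<partial>A)"
    by (subst pmf_exp_nn[OF ff]) (simp add: nn_integral_pair_pmf' ennreal_mult assms)
  also have "\<dots> = (\<integral>\<^sup>+a. ennreal (f a) * (\<integral>\<^sup>+b. ennreal (g b) \<partial>C) \<partial>A)"
    by (simp add: nn_integral_cmult)
  also have "\<dots> = (\<integral>\<^sup>+a. ennreal (f a) \<partial>A) * (\<integral>\<^sup>+b. ennreal (g b) \<partial>C)"
    by (simp add: nn_integral_multc)
  also have "\<dots> = ennreal (measure_pmf.expectation A f * measure_pmf.expectation C g)"
    by (subst pmf_exp_nn[OF assms(1,2), symmetric], subst pmf_exp_nn[OF assms(3,4), symmetric])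
       (simp add: ennreal_mult pmf_exp_nonneg_le[OF assms(1,2)] pmf_exp_nonneg_le[OF assms(3,4)])
  finally show ?thesis
    by (subst (asm) ennreal_inj) (use ff pmf_exp_nonneg_le(1)[OF assms(1,2), of A] pmf_exp_nonneg_le(1)[OF assms(3,4), of C] in \<open>auto intro: integral_nonneg_AE\<close>)
qed

lemma Pi_marg1:
  assumes "finite K" "k \<in> K"
  shows "map_pmf (\<lambda>h. h k) (Pi_pmf K d (\<lambda>_. p)) = p"
  using Pi_pmf_component[OF assms(1), of k d "\<lambda>_. p"] assms by simp

lemma Pi_marg2:
  assumes "finite K" "k \<in> K" "k' \<in> K" "k \<noteq> k'"
  shows "map_pmf (\<lambda>h. (h k, h k')) (Pi_pmf K d (\<lambda>_. p)) = pair_pmf p p"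
proof -
  have K: "K = insert k (K - {k})" using assms by auto
  have "Pi_pmf K d (\<lambda>_. p) = map_pmf (\<lambda>(y,f). f(k:=y)) (pair_pmf p (Pi_pmf (K - {k}) d (\<lambda>_. p)))"
    by (subst K, rule Pi_pmf_insert) (use assms in auto)
  then have "map_pmf (\<lambda>h. (h k, h k')) (Pi_pmf K d (\<lambda>_. p)) =
     map_pmf (\<lambda>(a, b). (id a, (\<lambda>f. f k') b)) (pair_pmf p (Pi_pmf (K - {k}) d (\<lambda>_. p)))"
    using assms(4) by (simp add: pmf.map_comp o_def case_prod_unfold)
  also have "\<dots> = pair_pmf p p"
    by (subst map_pair) (use Pi_marg1[of "K - {k}" k' d p] assms in auto)
  finally show ?thesis .
qed

lemma infsum_pmf_exp:
  fixes g :: "'a \<Rightarrow> real"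
  assumes "\<And>z. \<bar>g z\<bar> \<le> B"
  shows "(\<lambda>z. pmf P z * g z) summable_on UNIV"
    and "infsum (\<lambda>z. pmf P z * g z) UNIV = measure_pmf.expectation P g"
proof -
  have a: "Infinite_Set_Sum.abs_summable_on (\<lambda>z. pmf P z * g z) UNIV"
  proof (rule abs_summable_on_comparison_test[where g="\<lambda>z. B * pmf P z"])
    show "Infinite_Set_Sum.abs_summable_on (\<lambda>z. B * pmf P z) UNIV"
      by (rule abs_summable_on_cmult_right) (rule pmf_abs_summable)
    fix z show "norm (pmf P z * g z) \<le> norm (B * pmf P z)"
      using assms[of z] by (auto simp: abs_mult mult.commute intro: mult_right_mono)
  qed
  then show "(\<lambda>z. pmf P z * g z) summable_on UNIV"
    using abs_summable_equivalent abs_summable_summable by blast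
  show "infsum (\<lambda>z. pmf P z * g z) UNIV = measure_pmf.expectation P g"
    by (simp add: pmf_expectation_eq_infsetsum infsetsum_infsum[OF a])
qed

lemma infsum_pmf:
  shows "(\<lambda>z. pmf P z) summable_on UNIV" "infsum (\<lambda>z. pmf P z) UNIV = 1"
  using infsum_pmf_exp[of "\<lambda>_. 1" 1 P] by auto

lemma exists_le_exp:
  fixes f :: "'a \<Rightarrow> real"
  assumes "integrable (measure_pmf M) f" "0 < \<eta>"
  shows "\<exists>x\<in>set_pmf M. f x \<le> measure_pmf.expectation M f + \<eta>"
proof (rule ccontr)
  assume "\<not> ?thesis"
  then have "AE x in measure_pmf M. measure_pmf.expectation M f + \<eta> \<le> f x"
    by (auto simp: AE_measure_pmf_iff)
  then have "measure_pmf.expectation M f + \<eta> \<le> measure_pmf.expectation M f"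
    by (rule measure_pmf.integral_ge_const[OF assms(1)])
  then show False using assms(2) by simp
qed

lemma prob_bind:
  "measure_pmf.prob (bind_pmf A f) S = measure_pmf.expectation A (\<lambda>a. measure_pmf.prob (f a) S)"
proof -
  have "measure_pmf.prob (bind_pmf A f) S = measure_pmf.expectation (bind_pmf A f) (indicator S)"
    by simp
  also have "\<dots> = measure_pmf.expectation A (\<lambda>a. measure_pmf.expectation (f a) (indicator S))"
    by (rule exp_bind[where B=1]) (auto simp: indicator_def)
  finally show ?thesis by simp
qed

lemma exp_pair_iter:
  fixes F :: "'a \<Rightarrow> 'b \<Rightarrow> real"
  assumes "\<And>a b. 0 \<le> F a b" "\<And>a b. F a b \<le> B"
  shows "measure_pmf.expectation (pair_pmf A C) (\<lambda>u. F (fst u) (snd u)) =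
         measure_pmf.expectation A (\<lambda>a. measure_pmf.expectation C (\<lambda>b. F a b))"
proof -
  have i1: "\<And>a. 0 \<le> measure_pmf.expectation C (\<lambda>b. F a b)" "\<And>a. measure_pmf.expectation C (\<lambda>b. F a b) \<le> B"
    by (rule pmf_exp_nonneg_le[of "\<lambda>b. F _ b" B], use assms in auto)+
  have ff: "\<And>u. 0 \<le> F (fst u) (snd u)" "\<And>u. F (fst u) (snd u) \<le> B" using assms by auto
  have "ennreal (measure_pmf.expectation (pair_pmf A C) (\<lambda>u. F (fst u) (snd u))) =
        (\<integral>\<^sup>+a. \<integral>\<^sup>+b. ennreal (F a b) \<partial>C \<partial>A)"
    by (subst pmf_exp_nn[OF ff]) (simp add: nn_integral_pair_pmf')
  also have "\<dots> = ennreal (measure_pmf.expectation A (\<lambda>a. measure_pmf.expectation C (\<lambda>b. F a b)))"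
    by (subst pmf_exp_nn[OF i1]) (subst pmf_exp_nn[OF assms], rule)
  finally show ?thesis
    by (subst (asm) ennreal_inj) (use i1 ff in \<open>auto intro: integral_nonneg_AE\<close>)
qed

lemma prob_change_measure:
  assumes "\<And>y. y \<in> S \<Longrightarrow> pmf P y \<le> \<theta> * pmf R y" "0 \<le> \<theta>"
  shows "measure_pmf.prob P S \<le> \<theta>"
proof -
  have "measure_pmf.prob P S = infsum (\<lambda>z. pmf P z * indicator S z) UNIV"
    by (subst infsum_pmf_exp(2)[where B=1]) (auto simp: indicator_def)
  also have "\<dots> \<le> infsum (\<lambda>z. \<theta> * (pmf R z * indicator S z)) UNIV"
  proof (rule infsum_mono)
    show "(\<lambda>z. pmf P z * indicator S z) summable_on UNIV"
      by (rule infsum_pmf_exp(1)[where B=1]) (auto simp: indicator_def)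
    show "(\<lambda>z. \<theta> * (pmf R z * indicator S z)) summable_on UNIV"
      by (intro summable_on_cmult_right infsum_pmf_exp(1)[where B=1]) (auto simp: indicator_def)
    fix z show "pmf P z * indicator S z \<le> \<theta> * (pmf R z * indicator S z)"
      using assms(1)[of z] by (auto simp: indicator_def)
  qed
  also have "\<dots> = \<theta> * measure_pmf.prob R S"
    by (subst infsum_cmult_right') (subst infsum_pmf_exp(2)[where B=1], auto simp: indicator_def)
  also have "\<dots> \<le> \<theta>" using assms(2) by (simp add: mult_left_le)
  finally show ?thesis .
qed

definition dens :: "('x \<Rightarrow> 'y pmf) \<Rightarrow> 'x pmf \<Rightarrow> nat \<Rightarrow> 'x \<Rightarrow> 'y \<Rightarrow> real" where
  "dens W p n x y = ln (pmf (W x) y / pmf (out_dist W p) y) / real n"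

lemma dens_big:
  fixes w r a :: real
  assumes "0 \<le> w" "0 \<le> r" "0 < n" "0 \<le> a" "a < ln (w / r) / n"
  shows "r \<le> exp (- n * a) * w"
proof -
  have "n * a < ln (w / r)" using assms by (simp add: field_simps)
  then have ln0: "0 < ln (w / r)" using assms by (smt (verit) mult_nonneg_nonneg)
  then have "w / r \<noteq> 0" by auto
  then have wr: "0 < w" "0 < r" using assms by (auto simp: less_le)
  then have "exp (n * a) < w / r" using \<open>n * a < ln (w / r)\<close> by (metis exp_less_mono exp_ln divide_pos_pos)
  then have "exp (n * a) * r < w" using wr by (simp add: field_simps)
  then have "r < exp (- n * a) * w" by (simp add: exp_minus field_simps)
  then show ?thesis by simp
qed

lemma exp_le_const:
  fixes f :: "'a \<Rightarrow> real"
  assumes "\<And>x. \<bar>f x\<bar> \<le> B" "\<And>x. x \<in> set_pmf M \<Longrightarrow> f x \<le> c"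
  shows "measure_pmf.expectation M f \<le> c"
proof -
  have "measure_pmf.expectation M f \<le> measure_pmf.expectation M (\<lambda>_. c)"
    by (rule integral_mono_AE) (use assms pmf_integrable_bounded[OF assms(1)] in \<open>auto simp: AE_measure_pmf_iff\<close>)
  then show ?thesis by simp
qed

lemma spec_F_exp:
  "spec_F W p n a = measure_pmf.expectation (p n) (\<lambda>x. measure_pmf.prob (W n x) {y. a < dens (W n) (p n) n x y})"
  unfolding spec_F_def dens_def prob_bind by (simp add: measure_map_pmf vimage_def)

lemma bob_cross:
  assumes "0 < n" "0 \<le> a"
  shows "measure_pmf.expectation (pair_pmf p p) (\<lambda>u. measure_pmf.prob (W (fst u)) {y. a < dens W p n (snd u) y}) \<le> exp (- real n * a)"
proof -
  have "measure_pmf.expectation (pair_pmf p p) (\<lambda>u. measure_pmf.prob (W (fst u)) {y. a < dens W p n (snd u) y})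
      = measure_pmf.expectation p (\<lambda>x. measure_pmf.expectation p (\<lambda>x'. measure_pmf.prob (W x) {y. a < dens W p n x' y}))"
    by (rule exp_pair_iter[where B=1]) auto
  also have "\<dots> = measure_pmf.expectation p (\<lambda>x'. measure_pmf.expectation p (\<lambda>x. measure_pmf.prob (W x) {y. a < dens W p n x' y}))"
    by (rule exp_swap_nonneg[where B=1]) auto
  also have "\<dots> = measure_pmf.expectation p (\<lambda>x'. measure_pmf.prob (out_dist W p) {y. a < dens W p n x' y})"
    by (simp add: out_dist_def prob_bind)
  also have "\<dots> \<le> exp (- real n * a)"
  proof (rule exp_le_const[where B=1])
    fix x' show "\<bar>measure_pmf.prob (out_dist W p) {y. a < dens W p n x' y}\<bar> \<le> 1" by simp
    show "measure_pmf.prob (out_dist W p) {y. a < dens W p n x' y} \<le> exp (- real n * a)"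
    proof (rule prob_change_measure[where R="W x'"])
      fix y assume "y \<in> {y. a < dens W p n x' y}"
      then show "pmf (out_dist W p) y \<le> exp (- real n * a) * pmf (W x') y"
        using dens_big[of "pmf (W x') y" "pmf (out_dist W p) y" "real n" a] assms by (simp add: dens_def)
    qed simp
  qed
  finally show ?thesis .
qed

definition mkcode :: "nat \<Rightarrow> nat \<Rightarrow> ('x \<Rightarrow> 'y \<Rightarrow> bool) \<Rightarrow> (nat \<times> nat \<Rightarrow> 'x) \<Rightarrow> ('x, 'y) wtcode" where
  "mkcode M L G h = \<lparr>cM = M, cQ = (\<lambda>i. map_pmf (\<lambda>l. h (i, l)) (pmf_of_set {..<L})),
     cD = (\<lambda>i. {y. \<exists>l<L. G (h (i, l)) y \<and> (\<forall>k\<in>{..<M} \<times> {..<L}. k \<noteq> (i, l) \<longrightarrow> \<not> G (h k) y)})\<rparr>"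

lemma mkcode_valid: "1 \<le> M \<Longrightarrow> valid_code (mkcode M L G h)"
  unfolding valid_code_def mkcode_def by auto

lemma mkcode_cM [simp]: "cM (mkcode M L G h) = M"
  by (simp add: mkcode_def)

lemma prob_out_cQ:
  assumes "1 \<le> L"
  shows "measure_pmf.prob (out_dist W (cQ (mkcode M L G h) i)) S = (\<Sum>l<L. measure_pmf.prob (W (h (i, l))) S) / L"
proof -
  have ne: "{..<L} \<noteq> {}" using assms by (metis Suc_le_eq One_nat_def empty_iff lessThan_iff)
  show ?thesis
    unfolding out_dist_def mkcode_def using ne
    by (simp add: bind_map_pmf prob_bind integral_pmf_of_set)
qed

lemma pmf_out_cQ:
  assumes "1 \<le> L"
  shows "pmf (out_dist W (cQ (mkcode M L G h) i)) z = (\<Sum>l<L. pmf (W (h (i, l))) z) / L"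
proof -
  have ne: "{..<L} \<noteq> {}" using assms by (metis Suc_le_eq One_nat_def empty_iff lessThan_iff)
  show ?thesis
    unfolding out_dist_def mkcode_def using ne
    by (simp add: bind_map_pmf pmf_bind integral_pmf_of_set)
qed

definition bob_bound :: "nat \<Rightarrow> nat \<Rightarrow> ('x \<Rightarrow> 'y pmf) \<Rightarrow> ('x \<Rightarrow> 'y \<Rightarrow> bool) \<Rightarrow> (nat \<times> nat \<Rightarrow> 'x) \<Rightarrow> real" where
  "bob_bound M L W G h = (1 / (real M * real L)) * (\<Sum>k\<in>{..<M} \<times> {..<L}.
      measure_pmf.prob (W (h k)) {y. \<not> G (h k) y} +
      (\<Sum>k'\<in>{..<M} \<times> {..<L} - {k}. measure_pmf.prob (W (h k)) {y. G (h k') y}))"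

lemma eps_B_le:
  assumes "1 \<le> M" "1 \<le> L"
  shows "eps_B W (mkcode M L G h) \<le> bob_bound M L W G h"
proof -
  let ?K = "{..<M} \<times> {..<L}"
  let ?D = "cD (mkcode M L G h)"
  have D: "?D i = {y. \<exists>l<L. G (h (i, l)) y \<and> (\<forall>k\<in>?K. k \<noteq> (i, l) \<longrightarrow> \<not> G (h k) y)}" for i
    by (simp add: mkcode_def)
  have one: "measure_pmf.prob (W (h (i, l))) (- ?D i) \<le>
      measure_pmf.prob (W (h (i,l))) {y. \<not> G (h (i,l)) y} +
      (\<Sum>k'\<in>?K - {(i,l)}. measure_pmf.prob (W (h (i,l))) {y. G (h k') y})"
    if "l < L" for i l
  proof -
    have "- ?D i \<subseteq> {y. \<not> G (h (i,l)) y} \<union> (\<Union>k'\<in>?K - {(i,l)}. {y. G (h k') y})"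
      using that unfolding D by auto
    then have "measure_pmf.prob (W (h (i, l))) (- ?D i) \<le>
        measure_pmf.prob (W (h (i, l))) ({y. \<not> G (h (i,l)) y} \<union> (\<Union>k'\<in>?K - {(i,l)}. {y. G (h k') y}))"
      by (rule measure_pmf.finite_measure_mono) simp
    also have "\<dots> \<le> measure_pmf.prob (W (h (i,l))) {y. \<not> G (h (i,l)) y} +
        measure_pmf.prob (W (h (i, l))) (\<Union>k'\<in>?K - {(i,l)}. {y. G (h k') y})"
      by (rule measure_Un_le) auto
    also have "measure_pmf.prob (W (h (i, l))) (\<Union>k'\<in>?K - {(i,l)}. {y. G (h k') y}) \<le>
        (\<Sum>k'\<in>?K - {(i,l)}. measure_pmf.prob (W (h (i,l))) {y. G (h k') y})"
      by (rule measure_pmf.finite_measure_subadditive_finite) auto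
    finally show ?thesis by simp
  qed
  have "eps_B W (mkcode M L G h) = (1 / real M) * (\<Sum>i<M. (\<Sum>l<L. measure_pmf.prob (W (h (i, l))) (- ?D i)) / L)"
    unfolding eps_B_def mkcode_cM by (simp add: prob_out_cQ[OF assms(2)])
  also have "\<dots> = (1 / (real M * real L)) * (\<Sum>i<M. \<Sum>l<L. measure_pmf.prob (W (h (i, l))) (- ?D i))"
    by (simp add: sum_divide_distrib[symmetric] sum_distrib_left)
  also have "\<dots> \<le> (1 / (real M * real L)) * (\<Sum>i<M. \<Sum>l<L.
      measure_pmf.prob (W (h (i,l))) {y. \<not> G (h (i,l)) y} +
      (\<Sum>k'\<in>?K - {(i,l)}. measure_pmf.prob (W (h (i,l))) {y. G (h k') y}))"
    by (intro mult_left_mono sum_mono one) auto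
  also have "\<dots> = bob_bound M L W G h"
    unfolding bob_bound_def by (simp add: sum.cartesian_product)
  finally show ?thesis .
qed

lemma exp_code1:
  fixes F :: "'x \<Rightarrow> real"
  assumes "finite K" "k \<in> K"
  shows "measure_pmf.expectation (Pi_pmf K d (\<lambda>_. p)) (\<lambda>h. F (h k)) = measure_pmf.expectation p F"
proof -
  have "measure_pmf.expectation (Pi_pmf K d (\<lambda>_. p)) (\<lambda>h. F (h k)) =
        measure_pmf.expectation (map_pmf (\<lambda>h. h k) (Pi_pmf K d (\<lambda>_. p))) F"
    by simp
  also have "\<dots> = measure_pmf.expectation p F" by (simp only: Pi_marg1[OF assms])
  finally show ?thesis .
qed

lemma exp_code2:
  fixes F :: "'x \<Rightarrow> 'x \<Rightarrow> real"
  assumes "finite K" "k \<in> K" "k' \<in> K" "k \<noteq> k'"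
  shows "measure_pmf.expectation (Pi_pmf K d (\<lambda>_. p)) (\<lambda>h. F (h k) (h k')) =
         measure_pmf.expectation (pair_pmf p p) (\<lambda>u. F (fst u) (snd u))"
proof -
  have "measure_pmf.expectation (Pi_pmf K d (\<lambda>_. p)) (\<lambda>h. F (h k) (h k')) =
        measure_pmf.expectation (map_pmf (\<lambda>h. (h k, h k')) (Pi_pmf K d (\<lambda>_. p))) (\<lambda>u. F (fst u) (snd u))"
    by simp
  also have "\<dots> = measure_pmf.expectation (pair_pmf p p) (\<lambda>u. F (fst u) (snd u))" by (simp only: Pi_marg2[OF assms])
  finally show ?thesis .
qed

lemma exp_bob_bound:
  assumes "1 \<le> M" "1 \<le> L" "0 < n" "0 \<le> a"
  shows "measure_pmf.expectation (Pi_pmf ({..<M} \<times> {..<L}) d (\<lambda>_. p))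
           (bob_bound M L W (\<lambda>x y. a < dens W p n x y))
         \<le> measure_pmf.expectation p (\<lambda>x. measure_pmf.prob (W x) {y. \<not> a < dens W p n x y})
            + real M * real L * exp (- real n * a)"
proof -
  let ?K = "{..<M} \<times> {..<L}"
  let ?CP = "Pi_pmf ?K d (\<lambda>_. p)"
  let ?F1 = "\<lambda>x. measure_pmf.prob (W x) {y. \<not> a < dens W p n x y}"
  let ?F2 = "\<lambda>x x'. measure_pmf.prob (W x) {y. a < dens W p n x' y}"
  let ?e = "exp (- real n * a)"
  have finK: "finite ?K" by simp
  have cardK: "card ?K = M * L" by (simp add: card_cartesian_product)
  have int1: "integrable (measure_pmf ?CP) (\<lambda>h. ?F1 (h k))" for k
    by (rule pmf_integrable_bounded[where B=1]) simp
  have int2: "integrable (measure_pmf ?CP) (\<lambda>h. ?F2 (h k) (h k'))" for k k'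
    by (rule pmf_integrable_bounded[where B=1]) simp
  have "measure_pmf.expectation ?CP (bob_bound M L W (\<lambda>x y. a < dens W p n x y)) =
        (1 / (real M * real L)) * (\<Sum>k\<in>?K. measure_pmf.expectation ?CP (\<lambda>h. ?F1 (h k)) +
          (\<Sum>k'\<in>?K - {k}. measure_pmf.expectation ?CP (\<lambda>h. ?F2 (h k) (h k'))))"
    unfolding bob_bound_def
    by (simp add: integral_sum int1 int2 integrable_sum Bochner_Integration.integral_add)
  also have "\<dots> = (1 / (real M * real L)) * (\<Sum>k\<in>?K. measure_pmf.expectation p ?F1 +
          (\<Sum>k'\<in>?K - {k}. measure_pmf.expectation (pair_pmf p p) (\<lambda>u. ?F2 (fst u) (snd u))))"
  proof -
    have "\<And>k. k \<in> ?K \<Longrightarrow> measure_pmf.expectation ?CP (\<lambda>h. ?F1 (h k)) = measure_pmf.expectation p ?F1"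
      by (rule exp_code1[OF finK])
    moreover have "\<And>k k'. k \<in> ?K \<Longrightarrow> k' \<in> ?K - {k} \<Longrightarrow>
       measure_pmf.expectation ?CP (\<lambda>h. ?F2 (h k) (h k')) = measure_pmf.expectation (pair_pmf p p) (\<lambda>u. ?F2 (fst u) (snd u))"
      by (rule exp_code2[OF finK]) auto
    ultimately show ?thesis by (intro arg_cong2[where f="(*)"] refl sum.cong) auto
  qed
  also have "\<dots> \<le> (1 / (real M * real L)) * (\<Sum>k\<in>?K. measure_pmf.expectation p ?F1 + (\<Sum>k'\<in>?K - {k}. ?e))"
    by (intro mult_left_mono sum_mono add_left_mono bob_cross assms) auto
  also have "\<dots> \<le> (1 / (real M * real L)) * (\<Sum>k\<in>?K. measure_pmf.expectation p ?F1 + real M * real L * ?e)"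
  proof (intro mult_left_mono sum_mono add_left_mono)
    fix k assume "k \<in> ?K"
    have "(\<Sum>k'\<in>?K - {k}. ?e) = real (card (?K - {k})) * ?e" by simp
    also have "\<dots> \<le> real (card ?K) * ?e"
    proof (intro mult_right_mono)
      have "card (?K - {k}) \<le> card ?K" by (rule card_Diff1_le)
      then show "real (card (?K - {k})) \<le> real (card ?K)" by linarith
    qed simp
    finally show "(\<Sum>k'\<in>?K - {k}. ?e) \<le> real M * real L * ?e" by (simp add: cardK)
  qed auto
  also have "\<dots> = measure_pmf.expectation p ?F1 + real M * real L * ?e"
    using assms by (simp add: cardK)
  finally show ?thesis .
qed

definition tt :: "('x \<Rightarrow> 'z pmf) \<Rightarrow> 'x pmf \<Rightarrow> real \<Rightarrow> 'x \<Rightarrow> 'z \<Rightarrow> real" where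
  "tt V p c x z = (if pmf (V x) z \<le> exp c * pmf (out_dist V p) z then pmf (V x) z / pmf (out_dist V p) z else 0)"

definition vv :: "('x \<Rightarrow> 'z pmf) \<Rightarrow> 'x pmf \<Rightarrow> real \<Rightarrow> 'z \<Rightarrow> real" where
  "vv V p c z = measure_pmf.expectation p (\<lambda>x. tt V p c x z)"

definition uu :: "('x \<Rightarrow> 'z pmf) \<Rightarrow> 'x pmf \<Rightarrow> real \<Rightarrow> nat \<Rightarrow> (nat \<times> nat \<Rightarrow> 'x) \<Rightarrow> nat \<Rightarrow> 'z \<Rightarrow> real" where
  "uu V p c L h i z = (\<Sum>l<L. tt V p c (h (i, l)) z) / real L"

lemma tt_nonneg: "0 \<le> tt V p c x z"
  by (simp add: tt_def)

lemma tt_le: "tt V p c x z \<le> exp c"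
proof (cases "pmf (out_dist V p) z = 0")
  case True then show ?thesis by (simp add: tt_def)
next
  case False
  then have "0 < pmf (out_dist V p) z" using pmf_nonneg[of "out_dist V p" z] by linarith
  then show ?thesis by (simp add: tt_def field_simps)
qed

lemma tt_abs: "\<bar>tt V p c x z\<bar> \<le> exp c"
  using tt_nonneg[of V p c x z] tt_le[of V p c x z] by simp

lemma Q_tt_le: "pmf (out_dist V p) z * tt V p c x z \<le> pmf (V x) z"
proof (cases "pmf (out_dist V p) z = 0")
  case True then show ?thesis by (simp add: tt_def)
next
  case False
  then show ?thesis by (simp add: tt_def)
qed

lemma vv_nonneg: "0 \<le> vv V p c z" and vv_le: "vv V p c z \<le> exp c"
  unfolding vv_def by (rule pmf_exp_nonneg_le[of _ "exp c"], rule tt_nonneg, rule tt_le)+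

lemma Q_vv_le: "pmf (out_dist V p) z * vv V p c z \<le> pmf (out_dist V p) z"
proof -
  have "pmf (out_dist V p) z * vv V p c z = measure_pmf.expectation p (\<lambda>x. pmf (out_dist V p) z * tt V p c x z)"
    unfolding vv_def by simp
  also have "\<dots> \<le> measure_pmf.expectation p (\<lambda>x. pmf (V x) z)"
  proof (rule integral_mono)
    show "integrable (measure_pmf p) (\<lambda>x. pmf (out_dist V p) z * tt V p c x z)"
      by (rule pmf_integrable_bounded[where B="pmf (out_dist V p) z * exp c"]) (simp add: abs_mult tt_abs mult_left_mono)
    show "integrable (measure_pmf p) (\<lambda>x. pmf (V x) z)"
      by (rule pmf_integrable_bounded[where B=1]) (simp add: pmf_le_1)
  qed (rule Q_tt_le)
  also have "\<dots> = pmf (out_dist V p) z" by (simp add: out_dist_def pmf_bind)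
  finally show ?thesis .
qed

lemma vv_le1: "vv V p c z \<le> 1"
proof (cases "pmf (out_dist V p) z = 0")
  case True
  then have "\<And>x. tt V p c x z = 0" by (simp add: tt_def)
  then show ?thesis by (simp add: vv_def)
next
  case False
  then have "0 < pmf (out_dist V p) z" using pmf_nonneg[of "out_dist V p" z] by linarith
  then show ?thesis using Q_vv_le[of V p z c] by (simp add: mult_le_cancel_left1)
qed

lemma uu_nonneg: "0 \<le> uu V p c L h i z"
  unfolding uu_def by (intro divide_nonneg_nonneg sum_nonneg tt_nonneg) simp

lemma uu_le: "uu V p c L h i z \<le> exp c"
proof -
  have "(\<Sum>l<L. tt V p c (h (i, l)) z) \<le> (\<Sum>l<L. exp c)" by (intro sum_mono tt_le)
  then show ?thesis unfolding uu_def
    by (cases "L = 0") (auto simp: field_simps)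
qed

lemma uu_abs: "\<bar>uu V p c L h i z\<bar> \<le> exp c"
  using uu_nonneg[of V p c L h i z] uu_le[of V p c L h i z] by simp

lemma vv_abs: "\<bar>vv V p c z\<bar> \<le> exp c"
  using vv_nonneg[of V p c z] vv_le[of V p c z] by simp

lemma Q_uu_le:
  assumes "1 \<le> L"
  shows "pmf (out_dist V p) z * uu V p c L h i z \<le> pmf (out_dist V (cQ (mkcode M L G h) i)) z"
proof -
  have "pmf (out_dist V p) z * uu V p c L h i z = (\<Sum>l<L. pmf (out_dist V p) z * tt V p c (h (i, l)) z) / L"
    unfolding uu_def by (simp add: sum_distrib_left)
  also have "\<dots> \<le> (\<Sum>l<L. pmf (V (h (i, l))) z) / L"
    by (intro divide_right_mono sum_mono Q_tt_le) simp
  also have "\<dots> = pmf (out_dist V (cQ (mkcode M L G h) i)) z"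
    by (rule pmf_out_cQ[OF assms, symmetric])
  finally show ?thesis .
qed

definition eve_bound :: "('x \<Rightarrow> 'z pmf) \<Rightarrow> 'x pmf \<Rightarrow> real \<Rightarrow> nat \<Rightarrow> (nat \<times> nat \<Rightarrow> 'x) \<Rightarrow> nat \<Rightarrow> real" where
  "eve_bound V p c L h i =
     measure_pmf.expectation (out_dist V p) (\<lambda>z. \<bar>uu V p c L h i z - vv V p c z\<bar>)
     + (1 + measure_pmf.expectation (out_dist V p) (\<lambda>z. - uu V p c L h i z))
     + measure_pmf.expectation (out_dist V p) (\<lambda>z. 1 - vv V p c z)"

lemma eve_tv_le:
  assumes "1 \<le> L"
  shows "infsum (\<lambda>z. \<bar>pmf (out_dist V (cQ (mkcode M L G h) i)) z - pmf (out_dist V p) z\<bar>) UNIV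
         \<le> eve_bound V p c L h i"
proof -
  define P where "P = out_dist V (cQ (mkcode M L G h) i)"
  define Q where "Q = out_dist V p"
  define u where "u = uu V p c L h i"
  define v where "v = vv V p c"
  have ub: "\<And>z. \<bar>u z\<bar> \<le> exp c" "\<And>z. \<bar>v z\<bar> \<le> exp c" unfolding u_def v_def by (rule uu_abs vv_abs)+
  have b1: "\<bar>\<bar>u z - v z\<bar>\<bar> \<le> 2 * exp c" for z using ub(1)[of z] ub(2)[of z] by (smt (verit))
  have b2: "\<And>z. \<bar>- u z\<bar> \<le> exp c" using ub by simp
  have b3: "\<bar>1 - v z\<bar> \<le> 1 + exp c" for z using ub(2)[of z] by (smt (verit))
  define F where "F z = pmf Q z * \<bar>u z - v z\<bar> + (pmf P z + pmf Q z * (- u z)) + pmf Q z * (1 - v z)" for z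
  have s1: "(\<lambda>z. pmf Q z * \<bar>u z - v z\<bar>) summable_on UNIV" by (rule infsum_pmf_exp(1)[OF b1])
  have s2: "(\<lambda>z. pmf Q z * (- u z)) summable_on UNIV" by (rule infsum_pmf_exp(1)[OF b2])
  have s3: "(\<lambda>z. pmf Q z * (1 - v z)) summable_on UNIV" by (rule infsum_pmf_exp(1)[OF b3])
  have s4: "(\<lambda>z. pmf P z + pmf Q z * (- u z)) summable_on UNIV" by (intro summable_on_add s2 infsum_pmf(1))
  have sF: "F summable_on UNIV" unfolding F_def by (intro summable_on_add s1 s3 s4)
  have pw: "\<bar>pmf P z - pmf Q z\<bar> \<le> F z" for z
  proof -
    have a: "pmf Q z * u z \<le> pmf P z" unfolding P_def Q_def u_def by (rule Q_uu_le[OF assms])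
    have b: "pmf Q z * v z \<le> pmf Q z" unfolding Q_def v_def by (rule Q_vv_le)
    have c: "\<bar>pmf Q z * u z - pmf Q z * v z\<bar> = pmf Q z * \<bar>u z - v z\<bar>"
      by (simp add: right_diff_distrib[symmetric] abs_mult)
    have d: "F z = \<bar>pmf Q z * u z - pmf Q z * v z\<bar> + (pmf P z - pmf Q z * u z) + (pmf Q z - pmf Q z * v z)"
      unfolding F_def c by (simp add: algebra_simps)
    have gen: "\<And>P Q A B :: real. A \<le> P \<Longrightarrow> B \<le> Q \<Longrightarrow> \<bar>P - Q\<bar> \<le> \<bar>A - B\<bar> + (P - A) + (Q - B)"
      by linarith
    show ?thesis unfolding d by (rule gen[OF a b])
  qed
  have "infsum (\<lambda>z. \<bar>pmf P z - pmf Q z\<bar>) UNIV \<le> infsum F UNIV"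
  proof (rule infsum_mono[OF _ sF pw])
    show "(\<lambda>z. \<bar>pmf P z - pmf Q z\<bar>) summable_on UNIV"
      by (rule summable_on_comparison_test[OF sF]) (use pw in auto)
  qed
  also have "infsum F UNIV = infsum (\<lambda>z. pmf Q z * \<bar>u z - v z\<bar>) UNIV + (infsum (pmf P) UNIV + infsum (\<lambda>z. pmf Q z * (- u z)) UNIV)
      + infsum (\<lambda>z. pmf Q z * (1 - v z)) UNIV"
    unfolding F_def by (subst infsum_add, intro summable_on_add s1 s4, rule s3, subst infsum_add[OF s1 s4], subst infsum_add[OF infsum_pmf(1) s2], rule refl)
  also have "\<dots> = eve_bound V p c L h i"
    unfolding eve_bound_def P_def[symmetric] Q_def[symmetric] u_def[symmetric] v_def[symmetric]
    by (subst infsum_pmf_exp(2)[OF b1], subst infsum_pmf_exp(2)[OF b2], subst infsum_pmf_exp(2)[OF b3]) (simp add: infsum_pmf(2))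
  finally show ?thesis unfolding P_def Q_def .
qed

lemma tv_summable: "(\<lambda>z. \<bar>pmf A z - pmf B z\<bar>) summable_on UNIV"
proof (rule summable_on_comparison_test[OF summable_on_add[OF infsum_pmf(1)[of A] infsum_pmf(1)[of B]]])
  fix x show "\<bar>pmf A x - pmf B x\<bar> \<le> pmf A x + pmf B x" using pmf_nonneg[of A x] pmf_nonneg[of B x] by linarith
qed auto

lemma tv_triangle: "infsum (\<lambda>z. \<bar>pmf A z - pmf B z\<bar>) UNIV \<le>
   infsum (\<lambda>z. \<bar>pmf A z - pmf C z\<bar>) UNIV + infsum (\<lambda>z. \<bar>pmf B z - pmf C z\<bar>) UNIV"
proof -
  have "infsum (\<lambda>z. \<bar>pmf A z - pmf B z\<bar>) UNIV \<le> infsum (\<lambda>z. \<bar>pmf A z - pmf C z\<bar> + \<bar>pmf B z - pmf C z\<bar>) UNIV"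
    by (rule infsum_mono[OF tv_summable summable_on_add[OF tv_summable tv_summable]]) linarith
  also have "\<dots> = infsum (\<lambda>z. \<bar>pmf A z - pmf C z\<bar>) UNIV + infsum (\<lambda>z. \<bar>pmf B z - pmf C z\<bar>) UNIV"
    by (rule infsum_add[OF tv_summable tv_summable])
  finally show ?thesis .
qed

lemma eve_bound_nonneg: "1 \<le> L \<Longrightarrow> 0 \<le> eve_bound V p c L h i"
  by (rule order_trans[OF infsum_nonneg eve_tv_le]) auto

lemma d_E_le:
  assumes "1 \<le> M" "1 \<le> L"
  shows "d_E V (mkcode M L G h) \<le> (2 / real M) * (\<Sum>i<M. eve_bound V p c L h i)"
proof (cases "M = 1")
  case True
  then show ?thesis unfolding d_E_def using eve_bound_nonneg[OF assms(2)]
    by (simp add: sum_nonneg)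
next
  case False
  with assms have M2: "2 \<le> M" by simp
  let ?P = "\<lambda>i. out_dist V (cQ (mkcode M L G h) i)"
  let ?e = "\<lambda>i. eve_bound V p c L h i"
  have pair: "infsum (\<lambda>z. \<bar>pmf (?P i) z - pmf (?P j) z\<bar>) UNIV \<le> ?e i + ?e j" for i j
    using tv_triangle[of "?P i" "?P j" "out_dist V p"] eve_tv_le[OF assms(2), of V M G h i p c]
      eve_tv_le[OF assms(2), of V M G h j p c] by linarith
  have "d_E V (mkcode M L G h) \<le> (1 / (real M * (real M - 1))) * (\<Sum>i<M. \<Sum>j\<in>{..<M} - {i}. ?e i + ?e j)"
    unfolding d_E_def mkcode_cM using M2
    by (intro mult_left_mono sum_mono pair) auto
  also have "(\<Sum>i<M. \<Sum>j\<in>{..<M} - {i}. ?e i + ?e j) = (\<Sum>i<M. (real M - 1) * ?e i + ((\<Sum>j<M. ?e j) - ?e i))"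
  proof (rule sum.cong[OF refl])
    fix i assume i: "i \<in> {..<M}"
    have "(\<Sum>j\<in>{..<M} - {i}. ?e i + ?e j) = real (card ({..<M} - {i})) * ?e i + (\<Sum>j\<in>{..<M} - {i}. ?e j)"
      by (simp add: sum.distrib)
    also have "real (card ({..<M} - {i})) = real M - 1" using i M2 by (simp add: of_nat_diff)
    also have "(\<Sum>j\<in>{..<M} - {i}. ?e j) = (\<Sum>j<M. ?e j) - ?e i" using i by (simp add: sum_diff1)
    finally show "(\<Sum>j\<in>{..<M} - {i}. ?e i + ?e j) = (real M - 1) * ?e i + ((\<Sum>j<M. ?e j) - ?e i)" .
  qed
  also have "\<dots> = 2 * (real M - 1) * (\<Sum>i<M. ?e i)"
    by (simp add: sum.distrib sum_subtractf sum_distrib_left algebra_simps)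
  also have "(1 / (real M * (real M - 1))) * (2 * (real M - 1) * (\<Sum>i<M. ?e i)) = (2 / real M) * (\<Sum>i<M. ?e i)"
    using M2 by (simp add: field_simps)
  finally show ?thesis .
qed

lemma exp_uu:
  assumes "i < M" "1 \<le> L"
  shows "measure_pmf.expectation (Pi_pmf ({..<M} \<times> {..<L}) d (\<lambda>_. p)) (\<lambda>h. uu V p c L h i z) = vv V p c z"
proof -
  let ?CP = "Pi_pmf ({..<M} \<times> {..<L}) d (\<lambda>_. p)"
  have int: "integrable (measure_pmf ?CP) (\<lambda>h. tt V p c (h (i, l)) z)" for l
    by (rule pmf_integrable_bounded[where B="exp c"]) (rule tt_abs)
  have "measure_pmf.expectation ?CP (\<lambda>h. uu V p c L h i z) = (\<Sum>l<L. measure_pmf.expectation ?CP (\<lambda>h. tt V p c (h (i, l)) z)) / real L"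
    unfolding uu_def by (simp add: integral_sum int)
  also have "\<dots> = (\<Sum>l<L. vv V p c z) / real L"
    unfolding vv_def using assms by (intro arg_cong2[where f="(/)"] sum.cong refl exp_code1[where F="\<lambda>x. tt V p c x z"]) auto
  also have "\<dots> = vv V p c z" using assms by simp
  finally show ?thesis .
qed

lemma exp_uu_sq:
  assumes "i < M" "1 \<le> L"
  shows "measure_pmf.expectation (Pi_pmf ({..<M} \<times> {..<L}) d (\<lambda>_. p)) (\<lambda>h. (uu V p c L h i z - vv V p c z)\<^sup>2) \<le> exp c / real L"
proof -
  let ?CP = "Pi_pmf ({..<M} \<times> {..<L}) d (\<lambda>_. p)"
  let ?K = "{..<M} \<times> {..<L}"
  define t where "t x = tt V p c x z" for x
  define v where "v = vv V p c z"
  define u where "u h = uu V p c L h i z" for h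
  have t0: "0 \<le> t x" and t1: "t x \<le> exp c" for x unfolding t_def by (rule tt_nonneg tt_le)+
  have v0: "0 \<le> v" and v1: "v \<le> 1" unfolding v_def by (rule vv_nonneg vv_le1)+
  have Et: "measure_pmf.expectation p t = v" unfolding v_def vv_def t_def ..
  have u_def': "u h = (\<Sum>l<L. t (h (i, l))) / real L" for h unfolding u_def uu_def t_def ..
  have ub: "\<bar>u h\<bar> \<le> exp c" for h unfolding u_def by (rule uu_abs)
  have Eu: "measure_pmf.expectation ?CP u = v" unfolding u_def v_def by (rule exp_uu[OF assms])
  have intt: "integrable (measure_pmf ?CP) (\<lambda>h. t (h (i, l)) * t (h (i, l')))" for l l'
    by (rule pmf_integrable_bounded[where B="exp c * exp c"]) (simp add: abs_mult t0 t1 mult_mono)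
  have intu: "integrable (measure_pmf ?CP) u" by (rule pmf_integrable_bounded[OF ub])
  have intu2: "integrable (measure_pmf ?CP) (\<lambda>h. (u h)\<^sup>2)"
  proof (rule pmf_integrable_bounded[where B="exp c * exp c"])
    fix h
    have "\<bar>u h\<bar> * \<bar>u h\<bar> \<le> exp c * exp c" by (rule mult_mono) (use ub[of h] in auto)
    then show "\<bar>(u h)\<^sup>2\<bar> \<le> exp c * exp c" by (simp add: power2_eq_square abs_mult)
  qed
  have Ett: "measure_pmf.expectation ?CP (\<lambda>h. t (h (i, l)) * t (h (i, l'))) \<le> (if l = l' then exp c * v else v\<^sup>2)"
    if "l < L" "l' < L" for l l'
  proof (cases "l = l'")
    case True
    have "measure_pmf.expectation ?CP (\<lambda>h. t (h (i, l)) * t (h (i, l'))) = measure_pmf.expectation p (\<lambda>x. t x * t x)"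
      using True assms that exp_code1[where F="\<lambda>x. t x * t x" and K="?K" and k="(i,l)" and d=d and p=p] by simp
    also have "\<dots> \<le> measure_pmf.expectation p (\<lambda>x. exp c * t x)"
    proof (rule integral_mono)
      show "integrable (measure_pmf p) (\<lambda>x. t x * t x)"
        by (rule pmf_integrable_bounded[where B="exp c * exp c"]) (simp add: abs_mult t0 t1 mult_mono)
      show "integrable (measure_pmf p) (\<lambda>x. exp c * t x)"
        by (rule pmf_integrable_bounded[where B="exp c * exp c"]) (simp add: abs_mult t0 t1 mult_mono)
      fix x show "t x * t x \<le> exp c * t x" using t0[of x] t1[of x] by (simp add: mult_right_mono)
    qed
    also have "\<dots> = exp c * v" using Et by simp
    finally show ?thesis using True by simp
  next
    case False
    have "measure_pmf.expectation ?CP (\<lambda>h. t (h (i, l)) * t (h (i, l'))) =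
          measure_pmf.expectation (pair_pmf p p) (\<lambda>u. t (fst u) * t (snd u))"
      using False assms that by (intro exp_code2[where F="\<lambda>x y. t x * t y"]) auto
    also have "\<dots> = v * v" using exp_pair_mult[of t "exp c" t p p] t0 t1 Et by simp
    finally show ?thesis using False by (simp add: power2_eq_square)
  qed
  have "measure_pmf.expectation ?CP (\<lambda>h. (u h)\<^sup>2) =
        (\<Sum>l<L. \<Sum>l'<L. measure_pmf.expectation ?CP (\<lambda>h. t (h (i, l)) * t (h (i, l')))) / (real L)\<^sup>2"
    unfolding u_def' power_divide by (simp add: power2_eq_square sum_product integral_sum intt integrable_sum)
  also have "\<dots> \<le> (\<Sum>l<L. \<Sum>l'<L. (if l = l' then exp c * v else v\<^sup>2)) / (real L)\<^sup>2"
    by (intro divide_right_mono sum_mono Ett) auto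
  also have "(\<Sum>l<L. \<Sum>l'<L. (if l = l' then exp c * v else v\<^sup>2)) = (\<Sum>l<L. exp c * v + (real L - 1) * v\<^sup>2)"
  proof (rule sum.cong[OF refl])
    fix l assume l: "l \<in> {..<L}"
    have "(\<Sum>l'<L. (if l = l' then exp c * v else v\<^sup>2)) = (\<Sum>l'\<in>insert l ({..<L} - {l}). (if l = l' then exp c * v else v\<^sup>2))"
      using l by (simp add: insert_absorb)
    also have "\<dots> = exp c * v + (\<Sum>l'\<in>{..<L} - {l}. v\<^sup>2)"
      by (subst sum.insert) (auto intro!: sum.cong)
    also have "(\<Sum>l'\<in>{..<L} - {l}. v\<^sup>2) = (real L - 1) * v\<^sup>2" using l by (simp add: of_nat_diff)
    finally show "(\<Sum>l'<L. (if l = l' then exp c * v else v\<^sup>2)) = exp c * v + (real L - 1) * v\<^sup>2" .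
  qed
  also have "(\<Sum>l<L. exp c * v + (real L - 1) * v\<^sup>2) / (real L)\<^sup>2 = exp c * v / real L + (real L - 1) / real L * v\<^sup>2"
    using assms by (simp add: power2_eq_square field_simps)
  also have "\<dots> \<le> exp c / real L + v\<^sup>2"
  proof (rule add_mono)
    show "exp c * v / real L \<le> exp c / real L" using v1 v0 by (intro divide_right_mono) (auto simp: mult_left_le)
    have "(real L - 1) / real L \<le> 1" using assms by simp
    then show "(real L - 1) / real L * v\<^sup>2 \<le> v\<^sup>2" using mult_right_mono[of "(real L - 1) / real L" 1 "v\<^sup>2"] by simp
  qed
  finally have Eu2: "measure_pmf.expectation ?CP (\<lambda>h. (u h)\<^sup>2) \<le> exp c / real L + v\<^sup>2" .
  have "measure_pmf.expectation ?CP (\<lambda>h. (u h - v)\<^sup>2) = measure_pmf.expectation ?CP (\<lambda>h. (u h)\<^sup>2 - 2 * v * u h + v\<^sup>2)"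
    by (rule Bochner_Integration.integral_cong) (simp_all add: power2_diff algebra_simps)
  also have "\<dots> = measure_pmf.expectation ?CP (\<lambda>h. (u h)\<^sup>2) - 2 * v * v + v\<^sup>2"
    using intu intu2 Eu by simp
  also have "\<dots> \<le> exp c / real L" using Eu2 by (simp add: power2_eq_square)
  finally show ?thesis unfolding u_def v_def .
qed

lemma abs_le_sq: "0 < r \<Longrightarrow> \<bar>x::real\<bar> \<le> x\<^sup>2 / (2 * r) + r / 2"
proof -
  assume r: "0 < r"
  have "0 \<le> (\<bar>x\<bar> - r)\<^sup>2" by simp
  then have "2 * r * \<bar>x\<bar> \<le> x\<^sup>2 + r\<^sup>2" by (simp add: power2_diff power2_abs algebra_simps)
  then show ?thesis using r by (simp add: field_simps power2_eq_square)
qed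

lemma exp_abs_uu:
  assumes "i < M" "1 \<le> L" "0 < r"
  shows "measure_pmf.expectation (Pi_pmf ({..<M} \<times> {..<L}) d (\<lambda>_. p)) (\<lambda>h. \<bar>uu V p c L h i z - vv V p c z\<bar>)
         \<le> exp c / (2 * r * real L) + r / 2"
proof -
  let ?CP = "Pi_pmf ({..<M} \<times> {..<L}) d (\<lambda>_. p)"
  let ?w = "\<lambda>h. uu V p c L h i z - vv V p c z"
  have wb: "\<bar>?w h\<bar> \<le> 2 * exp c" for h using uu_abs[of V p c L h i z] vv_abs[of V p c z] by linarith
  have int1: "integrable (measure_pmf ?CP) (\<lambda>h. \<bar>?w h\<bar>)" by (rule pmf_integrable_bounded[where B="2 * exp c"]) (use wb in simp)
  have int2: "integrable (measure_pmf ?CP) (\<lambda>h. (?w h)\<^sup>2)"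
  proof (rule pmf_integrable_bounded[where B="2 * exp c * (2 * exp c)"])
    fix h
    have "\<bar>?w h\<bar> * \<bar>?w h\<bar> \<le> 2 * exp c * (2 * exp c)" by (rule mult_mono) (use wb[of h] in auto)
    then show "\<bar>(?w h)\<^sup>2\<bar> \<le> 2 * exp c * (2 * exp c)" by (simp add: power2_eq_square abs_mult)
  qed
  have "measure_pmf.expectation ?CP (\<lambda>h. \<bar>?w h\<bar>) \<le> measure_pmf.expectation ?CP (\<lambda>h. (?w h)\<^sup>2 / (2 * r) + r / 2)"
    by (rule integral_mono[OF int1]) (use int2 abs_le_sq[OF assms(3)] in auto)
  also have "\<dots> = measure_pmf.expectation ?CP (\<lambda>h. (?w h)\<^sup>2) / (2 * r) + r / 2"
    using int2 by simp
  also have "\<dots> \<le> (exp c / real L) / (2 * r) + r / 2"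
    using exp_uu_sq[OF assms(1,2), of d p V c z] assms(3) by (intro add_right_mono divide_right_mono) auto
  also have "(exp c / real L) / (2 * r) = exp c / (2 * r * real L)" by (simp add: field_simps)
  finally show ?thesis .
qed

lemma exp_eve_bound:
  assumes "i < M" "1 \<le> L" "0 < r"
  shows "measure_pmf.expectation (Pi_pmf ({..<M} \<times> {..<L}) d (\<lambda>_. p)) (\<lambda>h. eve_bound V p c L h i)
         \<le> exp c / (2 * r * real L) + r / 2 + 2 * (1 - measure_pmf.expectation (out_dist V p) (vv V p c))"
proof -
  let ?CP = "Pi_pmf ({..<M} \<times> {..<L}) d (\<lambda>_. p)"
  let ?Q = "out_dist V p"
  let ?w = "\<lambda>h z. \<bar>uu V p c L h i z - vv V p c z\<bar>"
  have wb: "?w h z \<le> 2 * exp c" for h z using uu_abs[of V p c L h i z] vv_abs[of V p c z] by linarith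
  have A: "measure_pmf.expectation ?CP (\<lambda>h. measure_pmf.expectation ?Q (?w h)) \<le> exp c / (2 * r * real L) + r / 2"
  proof -
    have "measure_pmf.expectation ?CP (\<lambda>h. measure_pmf.expectation ?Q (\<lambda>z. ?w h z)) =
          measure_pmf.expectation ?Q (\<lambda>z. measure_pmf.expectation ?CP (\<lambda>h. ?w h z))"
      by (rule exp_swap_nonneg[where B="2 * exp c"]) (use wb in auto)
    also have "\<dots> \<le> exp c / (2 * r * real L) + r / 2"
    proof (rule exp_le_const[where B="2 * exp c"])
      fix z
      show "\<bar>measure_pmf.expectation ?CP (\<lambda>h. ?w h z)\<bar> \<le> 2 * exp c"
        using pmf_exp_nonneg_le[of "\<lambda>h. ?w h z" "2 * exp c" ?CP] wb by auto
      show "measure_pmf.expectation ?CP (\<lambda>h. ?w h z) \<le> exp c / (2 * r * real L) + r / 2"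
        by (rule exp_abs_uu[OF assms])
    qed
    finally show ?thesis .
  qed
  have B: "measure_pmf.expectation ?CP (\<lambda>h. measure_pmf.expectation ?Q (uu V p c L h i)) = measure_pmf.expectation ?Q (vv V p c)"
  proof -
    have "measure_pmf.expectation ?CP (\<lambda>h. measure_pmf.expectation ?Q (\<lambda>z. uu V p c L h i z)) =
          measure_pmf.expectation ?Q (\<lambda>z. measure_pmf.expectation ?CP (\<lambda>h. uu V p c L h i z))"
      by (rule exp_swap_nonneg[where B="exp c"]) (auto intro: uu_nonneg uu_le)
    also have "\<dots> = measure_pmf.expectation ?Q (vv V p c)"
      by (simp add: exp_uu[OF assms(1,2)])
    finally show ?thesis by simp
  qed
  have int1: "integrable (measure_pmf ?CP) (\<lambda>h. measure_pmf.expectation ?Q (?w h))"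
    by (rule pmf_integrable_bounded[where B="2 * exp c"]) (use pmf_exp_nonneg_le[of _ "2 * exp c" ?Q] wb in \<open>auto\<close>)
  have int2: "integrable (measure_pmf ?CP) (\<lambda>h. measure_pmf.expectation ?Q (uu V p c L h i))"
  proof (rule pmf_integrable_bounded[where B="exp c"])
    fix h
    have "0 \<le> measure_pmf.expectation ?Q (uu V p c L h i)" "measure_pmf.expectation ?Q (uu V p c L h i) \<le> exp c"
      by (rule pmf_exp_nonneg_le[of "uu V p c L h i" "exp c"], rule uu_nonneg, rule uu_le)+
    then show "\<bar>measure_pmf.expectation ?Q (uu V p c L h i)\<bar> \<le> exp c" by simp
  qed
  have intv: "integrable (measure_pmf ?Q) (vv V p c)" by (rule pmf_integrable_bounded[OF vv_abs])
  have "measure_pmf.expectation ?CP (\<lambda>h. eve_bound V p c L h i) =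
        measure_pmf.expectation ?CP (\<lambda>h. measure_pmf.expectation ?Q (?w h)) + 1
        - measure_pmf.expectation ?CP (\<lambda>h. measure_pmf.expectation ?Q (uu V p c L h i))
        + (1 - measure_pmf.expectation ?Q (vv V p c))"
    unfolding eve_bound_def using int1 int2 intv by simp
  also have "\<dots> \<le> exp c / (2 * r * real L) + r / 2 + 2 * (1 - measure_pmf.expectation ?Q (vv V p c))"
    using A B by simp
  finally show ?thesis .
qed

lemma pmf_bind_ge: "pmf p x * pmf (V x) z \<le> pmf (out_dist V p) z"
proof -
  have "pmf p x * pmf (V x) z = infsum (\<lambda>x'. pmf p x' * pmf (V x') z) {x}" by (simp add: infsum_finite)
  also have "\<dots> \<le> infsum (\<lambda>x'. pmf p x' * pmf (V x') z) UNIV"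
    by (rule infsum_mono_neutral) (auto intro: summable_on_finite infsum_pmf_exp(1)[where B=1] simp: pmf_le_1)
  also have "\<dots> = measure_pmf.expectation p (\<lambda>x'. pmf (V x') z)"
    by (rule infsum_pmf_exp(2)[where B=1]) (simp add: pmf_le_1)
  also have "\<dots> = pmf (out_dist V p) z" by (simp add: out_dist_def pmf_bind)
  finally show ?thesis .
qed

lemma dens_small:
  fixes w r b :: real
  assumes "0 < w" "0 < r" "0 < n" "\<not> b < ln (w / r) / n"
  shows "w \<le> exp (n * b) * r"
proof -
  have "ln (w / r) \<le> n * b" using assms by (simp add: field_simps)
  then have "w / r \<le> exp (n * b)" using assms by (metis divide_pos_pos exp_le_cancel_iff exp_ln)
  then show ?thesis using assms by (simp add: field_simps)
qed

lemma E_tt_ge: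
  assumes "x \<in> set_pmf p" "0 < n"
  shows "measure_pmf.prob (V x) {z. \<not> b < dens V p n x z} \<le> measure_pmf.expectation (out_dist V p) (tt V p (real n * b) x)"
proof -
  let ?S = "{z. \<not> b < dens V p n x z}"
  let ?Q = "out_dist V p"
  have "measure_pmf.prob (V x) ?S = infsum (\<lambda>z. pmf (V x) z * indicator ?S z) UNIV"
    by (subst infsum_pmf_exp(2)[where B=1]) (auto simp: indicator_def)
  also have "\<dots> \<le> infsum (\<lambda>z. pmf ?Q z * tt V p (real n * b) x z) UNIV"
  proof (rule infsum_mono)
    show "(\<lambda>z. pmf (V x) z * indicator ?S z) summable_on UNIV"
      by (rule infsum_pmf_exp(1)[where B=1]) (auto simp: indicator_def)
    show "(\<lambda>z. pmf ?Q z * tt V p (real n * b) x z) summable_on UNIV"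
      by (rule infsum_pmf_exp(1)[OF tt_abs])
    fix z
    show "pmf (V x) z * indicator ?S z \<le> pmf ?Q z * tt V p (real n * b) x z"
    proof (cases "z \<in> ?S \<and> 0 < pmf (V x) z")
      case True
      have px: "0 < pmf p x" using assms(1) by (simp add: pmf_positive)
      have "0 < pmf p x * pmf (V x) z" using px True by simp
      then have Qp: "0 < pmf ?Q z" using pmf_bind_ge[of p x V z] by linarith
      have "pmf (V x) z \<le> exp (real n * b) * pmf ?Q z"
        using True Qp assms(2) dens_small[of "pmf (V x) z" "pmf ?Q z" "real n" b] by (simp add: dens_def)
      then have "tt V p (real n * b) x z = pmf (V x) z / pmf ?Q z" by (simp add: tt_def)
      then show ?thesis using True Qp by simp
    next
      case False
      then have "pmf (V x) z * indicator ?S z = 0" using pmf_nonneg[of "V x" z] by (auto simp: indicator_def)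
      then show ?thesis using tt_nonneg[of V p "real n * b" x z] pmf_nonneg[of ?Q z] by (metis mult_nonneg_nonneg)
    qed
  qed
  also have "\<dots> = measure_pmf.expectation ?Q (tt V p (real n * b) x)"
    by (rule infsum_pmf_exp(2)[OF tt_abs])
  finally show ?thesis .
qed

lemma E_vv_ge:
  assumes "0 < n"
  shows "1 - spec_F (\<lambda>_. V) (\<lambda>_. p) n b \<le> measure_pmf.expectation (out_dist V p) (vv V p (real n * b))"
proof -
  let ?Q = "out_dist V p"
  let ?c = "real n * b"
  have "measure_pmf.expectation ?Q (vv V p ?c) = measure_pmf.expectation ?Q (\<lambda>z. measure_pmf.expectation p (\<lambda>x. tt V p ?c x z))"
    unfolding vv_def ..
  also have "\<dots> = measure_pmf.expectation p (\<lambda>x. measure_pmf.expectation ?Q (\<lambda>z. tt V p ?c x z))"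
    by (rule exp_swap_nonneg[where B="exp ?c"]) (rule tt_nonneg, rule tt_le)
  also have "\<dots> \<ge> measure_pmf.expectation p (\<lambda>x. measure_pmf.prob (V x) {z. \<not> b < dens V p n x z})"
  proof (rule integral_mono_AE)
    show "integrable (measure_pmf p) (\<lambda>x. measure_pmf.prob (V x) {z. \<not> b < dens V p n x z})"
      by (rule pmf_integrable_bounded[where B=1]) simp
    show "integrable (measure_pmf p) (\<lambda>x. measure_pmf.expectation ?Q (\<lambda>z. tt V p ?c x z))"
    proof (rule pmf_integrable_bounded[where B="exp ?c"])
      fix x
      have "0 \<le> measure_pmf.expectation ?Q (tt V p ?c x)" "measure_pmf.expectation ?Q (tt V p ?c x) \<le> exp ?c"
        by (rule pmf_exp_nonneg_le[of "tt V p ?c x" "exp ?c"], rule tt_nonneg, rule tt_le)+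
      then show "\<bar>measure_pmf.expectation ?Q (\<lambda>z. tt V p ?c x z)\<bar> \<le> exp ?c" by simp
    qed
    show "AE x in measure_pmf p. measure_pmf.prob (V x) {z. \<not> b < dens V p n x z} \<le> measure_pmf.expectation ?Q (\<lambda>z. tt V p ?c x z)"
      using E_tt_ge[OF _ assms] by (auto simp: AE_measure_pmf_iff)
  qed
  finally have *: "measure_pmf.expectation p (\<lambda>x. measure_pmf.prob (V x) {z. \<not> b < dens V p n x z}) \<le> measure_pmf.expectation ?Q (vv V p ?c)" .
  have "measure_pmf.expectation p (\<lambda>x. measure_pmf.prob (V x) {z. \<not> b < dens V p n x z}) =
        measure_pmf.expectation p (\<lambda>x. 1 - measure_pmf.prob (V x) {z. b < dens V p n x z})"
    by (rule Bochner_Integration.integral_cong[OF refl]) (simp add: measure_pmf.prob_compl[symmetric] Compl_eq_Diff_UNIV[symmetric] set_diff_eq)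
  also have "\<dots> = 1 - spec_F (\<lambda>_. V) (\<lambda>_. p) n b"
    unfolding spec_F_exp using pmf_integrable_bounded[of "\<lambda>x. measure_pmf.prob (V x) {z. b < dens V p n x z}" 1 p]
    by simp
  finally show ?thesis using * by simp
qed

lemma exp_compl_spec:
  "measure_pmf.expectation p (\<lambda>x. measure_pmf.prob (W x) {y. \<not> a < dens W p n x y}) = 1 - spec_F (\<lambda>_. W) (\<lambda>_. p) n a"
proof -
  have "measure_pmf.expectation p (\<lambda>x. measure_pmf.prob (W x) {y. \<not> a < dens W p n x y}) =
        measure_pmf.expectation p (\<lambda>x. 1 - measure_pmf.prob (W x) {y. a < dens W p n x y})"
    by (rule Bochner_Integration.integral_cong[OF refl]) (simp add: measure_pmf.prob_compl[symmetric] Compl_eq_Diff_UNIV[symmetric] set_diff_eq)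
  also have "\<dots> = 1 - spec_F (\<lambda>_. W) (\<lambda>_. p) n a"
    unfolding spec_F_exp using pmf_integrable_bounded[of "\<lambda>x. measure_pmf.prob (W x) {y. a < dens W p n x y}" 1 p]
    by simp
  finally show ?thesis .
qed

lemma eve_bound_abs: "\<bar>eve_bound V p c L h i\<bar> \<le> 4 * exp c + 2"
proof -
  let ?Q = "out_dist V p"
  have a: "\<bar>measure_pmf.expectation ?Q (\<lambda>z. \<bar>uu V p c L h i z - vv V p c z\<bar>)\<bar> \<le> 2 * exp c"
  proof -
    have "\<And>z. \<bar>uu V p c L h i z - vv V p c z\<bar> \<le> 2 * exp c"
      subgoal for z using uu_abs[of V p c L h i z] vv_abs[of V p c z] by linarith done
    then show ?thesis using pmf_exp_nonneg_le[of "\<lambda>z. \<bar>uu V p c L h i z - vv V p c z\<bar>" "2 * exp c" ?Q] by auto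
  qed
  have b: "\<bar>measure_pmf.expectation ?Q (\<lambda>z. - uu V p c L h i z)\<bar> \<le> exp c"
  proof -
    have "0 \<le> measure_pmf.expectation ?Q (uu V p c L h i)" "measure_pmf.expectation ?Q (uu V p c L h i) \<le> exp c"
      by (rule pmf_exp_nonneg_le[of "uu V p c L h i" "exp c"], rule uu_nonneg, rule uu_le)+
    then show ?thesis by simp
  qed
  have c: "\<bar>measure_pmf.expectation ?Q (\<lambda>z. 1 - vv V p c z)\<bar> \<le> 1 + exp c"
  proof -
    have "\<And>z. \<bar>1 - vv V p c z\<bar> \<le> 1 + exp c"
      subgoal for z using vv_abs[of V p c z] by linarith done
    then have "\<bar>measure_pmf.expectation ?Q (\<lambda>z. 1 - vv V p c z)\<bar> \<le> measure_pmf.expectation ?Q (\<lambda>z. \<bar>1 - vv V p c z\<bar>)"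
      by (intro integral_abs_bound)
    also have "\<dots> \<le> 1 + exp c" using pmf_exp_nonneg_le(2)[of "\<lambda>z. \<bar>1 - vv V p c z\<bar>" "1 + exp c" ?Q] \<open>\<And>z. \<bar>1 - vv V p c z\<bar> \<le> 1 + exp c\<close> by auto
    finally show ?thesis .
  qed
  show ?thesis unfolding eve_bound_def using a b c by linarith
qed

lemma bob_bound_int:
  "integrable (measure_pmf CP) (bob_bound M L W G)"
proof -
  have int1: "integrable (measure_pmf CP) (\<lambda>h. measure_pmf.prob (W (h k)) {y. \<not> G (h k) y})" for k
    by (rule pmf_integrable_bounded[where B=1]) simp
  have int2: "integrable (measure_pmf CP) (\<lambda>h. measure_pmf.prob (W (h k)) {y. G (h k') y})" for k k'
    by (rule pmf_integrable_bounded[where B=1]) simp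
  have "integrable (measure_pmf CP) (\<lambda>h. \<Sum>k\<in>{..<M} \<times> {..<L}.
      measure_pmf.prob (W (h k)) {y. \<not> G (h k) y} +
      (\<Sum>k'\<in>{..<M} \<times> {..<L} - {k}. measure_pmf.prob (W (h k)) {y. G (h k') y}))"
    by (simp add: int1 int2)
  then show ?thesis unfolding bob_bound_def by simp
qed

lemma code_exists:
  fixes W :: "'x \<Rightarrow> 'y pmf" and V :: "'x \<Rightarrow> 'z pmf"
  assumes "0 < n" "1 \<le> M" "1 \<le> L" "0 \<le> a" "0 < r"
  shows "\<exists>h. eps_B W (mkcode M L (\<lambda>x y. a < dens W p n x y) h) + d_E V (mkcode M L (\<lambda>x y. a < dens W p n x y) h)
     \<le> (1 - spec_F (\<lambda>_. W) (\<lambda>_. p) n a) + real M * real L * exp (- real n * a)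
       + 2 * (exp (real n * b) / (2 * r * real L) + r / 2 + 2 * spec_F (\<lambda>_. V) (\<lambda>_. p) n b) + r"
proof -
  define G where "G = (\<lambda>x y. a < dens W p n x y)"
  define CP where "CP = Pi_pmf ({..<M} \<times> {..<L}) undefined (\<lambda>_. p)"
  define c where "c = real n * b"
  define \<kappa> where "\<kappa> = exp c / (2 * r * real L) + r / 2"
  define \<Phi> where "\<Phi> h = bob_bound M L W G h + (2 / real M) * (\<Sum>i<M. eve_bound V p c L h i)" for h
  have inte: "integrable (measure_pmf CP) (\<lambda>h. eve_bound V p c L h i)" for i
    by (rule pmf_integrable_bounded[OF eve_bound_abs])
  have ie: "integrable (measure_pmf CP) (\<lambda>h. \<Sum>i<M. eve_bound V p c L h i)"
    by (simp add: inte)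
  have intP: "integrable (measure_pmf CP) \<Phi>"
    unfolding \<Phi>_def by (rule Bochner_Integration.integrable_add[OF bob_bound_int integrable_mult_right]) (rule ie)
  have Eb: "measure_pmf.expectation CP (bob_bound M L W G) \<le> (1 - spec_F (\<lambda>_. W) (\<lambda>_. p) n a) + real M * real L * exp (- real n * a)"
    using exp_bob_bound[OF assms(2,3,1,4), of undefined p W] unfolding CP_def G_def exp_compl_spec .
  have Ee: "measure_pmf.expectation CP (\<lambda>h. eve_bound V p c L h i) \<le> \<kappa> + 2 * spec_F (\<lambda>_. V) (\<lambda>_. p) n b"
    if "i < M" for i
  proof -
    have "measure_pmf.expectation CP (\<lambda>h. eve_bound V p c L h i) \<le> \<kappa> + 2 * (1 - measure_pmf.expectation (out_dist V p) (vv V p c))"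
      unfolding CP_def \<kappa>_def by (rule exp_eve_bound[OF that assms(3,5)])
    also have "\<dots> \<le> \<kappa> + 2 * spec_F (\<lambda>_. V) (\<lambda>_. p) n b"
      using E_vv_ge[OF assms(1), of V p b] unfolding c_def by simp
    finally show ?thesis .
  qed
  have e1: "measure_pmf.expectation CP \<Phi> = measure_pmf.expectation CP (bob_bound M L W G) +
        measure_pmf.expectation CP (\<lambda>h. (2 / real M) * (\<Sum>i<M. eve_bound V p c L h i))"
    unfolding \<Phi>_def by (rule Bochner_Integration.integral_add[OF bob_bound_int integrable_mult_right[OF ie]])
  have e2: "measure_pmf.expectation CP (\<lambda>h. (2 / real M) * (\<Sum>i<M. eve_bound V p c L h i)) =
      (2 / real M) * measure_pmf.expectation CP (\<lambda>h. \<Sum>i<M. eve_bound V p c L h i)"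
    by (rule Bochner_Integration.integral_mult_right_zero)
  have e3: "measure_pmf.expectation CP (\<lambda>h. \<Sum>i<M. eve_bound V p c L h i) = (\<Sum>i<M. measure_pmf.expectation CP (\<lambda>h. eve_bound V p c L h i))"
    using Bochner_Integration.integral_sum[where I="{..<M}" and M="measure_pmf CP" and f="\<lambda>i h. eve_bound V p c L h i"] inte by simp
  have "measure_pmf.expectation CP \<Phi> = measure_pmf.expectation CP (bob_bound M L W G) +
        (2 / real M) * (\<Sum>i<M. measure_pmf.expectation CP (\<lambda>h. eve_bound V p c L h i))"
    unfolding e1 e2 e3 ..
  also have "\<dots> \<le> ((1 - spec_F (\<lambda>_. W) (\<lambda>_. p) n a) + real M * real L * exp (- real n * a)) +
        (2 / real M) * (\<Sum>i<M. \<kappa> + 2 * spec_F (\<lambda>_. V) (\<lambda>_. p) n b)"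
    by (intro add_mono Eb mult_left_mono sum_mono Ee) auto
  also have "(2 / real M) * (\<Sum>i<M. \<kappa> + 2 * spec_F (\<lambda>_. V) (\<lambda>_. p) n b) = 2 * (\<kappa> + 2 * spec_F (\<lambda>_. V) (\<lambda>_. p) n b)"
    using assms(2) by simp
  finally have EP: "measure_pmf.expectation CP \<Phi> \<le> (1 - spec_F (\<lambda>_. W) (\<lambda>_. p) n a) + real M * real L * exp (- real n * a)
      + 2 * (\<kappa> + 2 * spec_F (\<lambda>_. V) (\<lambda>_. p) n b)" .
  obtain h where h: "\<Phi> h \<le> measure_pmf.expectation CP \<Phi> + r"
    using exists_le_exp[OF intP assms(5)] by blast
  have "eps_B W (mkcode M L G h) + d_E V (mkcode M L G h) \<le> \<Phi> h"
    unfolding \<Phi>_def by (intro add_mono eps_B_le d_E_le assms)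
  then show ?thesis using h EP unfolding G_def \<kappa>_def c_def by (intro exI[of _ h]) linarith
qed

lemma infsum_finsum:
  fixes f :: "'i \<Rightarrow> 'a \<Rightarrow> real"
  assumes "finite I" "\<And>i. i \<in> I \<Longrightarrow> f i summable_on A"
  shows "(\<lambda>x. \<Sum>i\<in>I. f i x) summable_on A \<and> infsum (\<lambda>x. \<Sum>i\<in>I. f i x) A = (\<Sum>i\<in>I. infsum (f i) A)"
  using assms
proof (induction I rule: finite_induct)
  case empty
  then show ?case by simp
next
  case (insert j I)
  then have sj: "f j summable_on A" and IH: "(\<lambda>x. \<Sum>i\<in>I. f i x) summable_on A"
      "infsum (\<lambda>x. \<Sum>i\<in>I. f i x) A = (\<Sum>i\<in>I. infsum (f i) A)" by auto
  have "(\<lambda>x. f j x + (\<Sum>i\<in>I. f i x)) summable_on A" by (rule summable_on_add[OF sj IH(1)])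
  moreover have "infsum (\<lambda>x. f j x + (\<Sum>i\<in>I. f i x)) A = infsum (f j) A + (\<Sum>i\<in>I. infsum (f i) A)"
    by (subst infsum_add[OF sj IH(1)]) (simp add: IH(2))
  ultimately show ?case using insert by simp
qed

lemma kl_pointwise:
  fixes P R B Mr :: real
  assumes "0 \<le> P" "0 \<le> R" "P \<le> Mr * R" "1 \<le> Mr" "max 1 (ln Mr) \<le> B"
  shows "P * ln (P / R) \<le> B * \<bar>P - R\<bar> + (P - R)"
proof (cases "R = 0")
  case True
  then have "P = 0" using assms by simp
  then show ?thesis using True by simp
next
  case False
  then have R: "0 < R" using assms by simp
  show ?thesis
  proof (cases "P = 0")
    case True
    have "1 \<le> B" using assms(5) by simp
    then show ?thesis using True R by (simp add: mult_right_mono)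
  next
    case False
    then have P: "0 < P" using assms by simp
    define t where "t = P / R"
    have t: "0 < t" "t \<le> Mr" using P R assms(3) by (auto simp: t_def field_simps)
    have Pt: "P = R * t" using R by (simp add: t_def)
    have key: "t * ln t - t + 1 \<le> B * \<bar>t - 1\<bar>"
    proof (cases "1 \<le> t")
      case True
      have "ln t \<le> t - 1" using t by (intro ln_le_minus_one) auto
      then have "t * ln t - t + 1 \<le> (t - 1) * ln t" by (simp add: algebra_simps)
      also have "\<dots> \<le> (t - 1) * ln Mr" using True t by (intro mult_left_mono) auto
      also have "\<dots> \<le> (t - 1) * B" using True assms(5) by (intro mult_left_mono) auto
      finally show ?thesis using True by (simp add: mult.commute)
    next
      case False
      have "t * ln t \<le> 0" using t False by (intro mult_nonneg_nonpos) auto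
      then have "t * ln t - t + 1 \<le> 1 - t" by simp
      also have "\<dots> \<le> B * (1 - t)" using False assms(5) by (intro mult_right_mono[of 1 B "1 - t", simplified]) auto
      finally show ?thesis using False by simp
    qed
    have "P * ln (P / R) = R * (t * ln t)" by (simp add: Pt t_def[symmetric])
    also have "\<dots> \<le> R * (B * \<bar>t - 1\<bar> + t - 1)" using key R by (intro mult_left_mono) auto
    also have "\<dots> = B * \<bar>P - R\<bar> + (P - R)"
    proof -
      have "P - R = R * (t - 1)" by (simp add: Pt algebra_simps)
      then have "\<bar>P - R\<bar> = R * \<bar>t - 1\<bar>" using R by (simp add: abs_mult)
      then show ?thesis by (simp add: Pt algebra_simps)
    qed
    finally show ?thesis .
  qed
qed

lemma I_E_le:
  fixes V :: "'x \<Rightarrow> 'z pmf" and \<Phi> :: "('x, 'y) wtcode"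
  assumes M1: "1 \<le> cM \<Phi>"
  shows "I_E V \<Phi> \<le> max 1 (ln (real (cM \<Phi>))) * d_E V \<Phi>"
proof -
  define M where "M = cM \<Phi>"
  define P where "P i = out_dist V (cQ \<Phi> i)" for i
  define R where "R = eve_mix V \<Phi>"
  define B where "B = max 1 (ln (real M))"
  define D where "D i j = infsum (\<lambda>z. \<bar>pmf (P i) z - pmf (P j) z\<bar>) UNIV" for i j
  have M: "1 \<le> M" using M1 by (simp add: M_def)
  have B1: "1 \<le> B" by (simp add: B_def)
  have Rdef: "R z = (1 / real M) * (\<Sum>j<M. pmf (P j) z)" for z
    by (simp add: R_def eve_mix_def M_def P_def)
  have D0: "0 \<le> D i j" for i j unfolding D_def by (rule infsum_nonneg) simp
  have Dii: "D i i = 0" for i unfolding D_def by simp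
  have sumP: "(\<lambda>z. \<Sum>j<M. pmf (P j) z) summable_on UNIV \<and> infsum (\<lambda>z. \<Sum>j<M. pmf (P j) z) UNIV = (\<Sum>j<M. infsum (pmf (P j)) UNIV)"
    by (rule infsum_finsum) (auto intro: infsum_pmf(1))
  have sR: "R summable_on UNIV" unfolding Rdef[abs_def] by (rule summable_on_cmult_right) (use sumP in blast)
  have iR: "infsum R UNIV = 1"
    unfolding Rdef[abs_def] by (subst infsum_cmult_right') (use sumP M in \<open>simp add: infsum_pmf(2)\<close>)
  have R0: "0 \<le> R z" for z unfolding Rdef by (simp add: sum_nonneg)
  have PR: "pmf (P i) z \<le> real M * R z" if "i < M" for i z
  proof -
    have "pmf (P i) z \<le> (\<Sum>j<M. pmf (P j) z)" using that by (intro member_le_sum) auto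
    then show ?thesis using M by (simp add: Rdef)
  qed
  have tvR: "(\<lambda>z. \<bar>pmf (P i) z - R z\<bar>) summable_on UNIV" for i
  proof (rule summable_on_comparison_test[OF summable_on_add[OF infsum_pmf(1)[of "P i"] sR]])
    fix x show "\<bar>pmf (P i) x - R x\<bar> \<le> pmf (P i) x + R x" using R0[of x] pmf_nonneg[of "P i" x] by linarith
  qed auto
  have kl: "kl_div (P i) R \<le> B * infsum (\<lambda>z. \<bar>pmf (P i) z - R z\<bar>) UNIV" if "i < M" for i
  proof (cases "(\<lambda>z. pmf (P i) z * ln (pmf (P i) z / R z)) summable_on UNIV")
    case True
    have sd: "(\<lambda>z. pmf (P i) z + (-1) * R z) summable_on UNIV"
      by (intro summable_on_add infsum_pmf(1) summable_on_cmult_right sR)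
    have "kl_div (P i) R \<le> infsum (\<lambda>z. B * \<bar>pmf (P i) z - R z\<bar> + (pmf (P i) z + (-1) * R z)) UNIV"
      unfolding kl_div_def
    proof (rule infsum_mono[OF True])
      show "(\<lambda>z. B * \<bar>pmf (P i) z - R z\<bar> + (pmf (P i) z + (-1) * R z)) summable_on UNIV"
        by (intro summable_on_add summable_on_cmult_right tvR sd)
      fix z show "pmf (P i) z * ln (pmf (P i) z / R z) \<le> B * \<bar>pmf (P i) z - R z\<bar> + (pmf (P i) z + (-1) * R z)"
        using kl_pointwise[OF pmf_nonneg R0 PR[OF that] _ _, of B] M by (simp add: B_def)
    qed
    also have "\<dots> = B * infsum (\<lambda>z. \<bar>pmf (P i) z - R z\<bar>) UNIV + (1 + (-1) * 1)"
      by (subst infsum_add, intro summable_on_cmult_right tvR, rule sd, subst infsum_add[OF infsum_pmf(1)],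
          intro summable_on_cmult_right sR) (simp only: infsum_cmult_right', simp add: infsum_pmf(2) iR)
    finally show ?thesis by simp
  next
    case False
    then have "kl_div (P i) R = 0" unfolding kl_div_def by (rule infsum_not_exists)
    moreover have "0 \<le> B * infsum (\<lambda>z. \<bar>pmf (P i) z - R z\<bar>) UNIV" using B1 by (intro mult_nonneg_nonneg infsum_nonneg) auto
    ultimately show ?thesis by simp
  qed
  have tvPR: "infsum (\<lambda>z. \<bar>pmf (P i) z - R z\<bar>) UNIV \<le> (1 / real M) * (\<Sum>j<M. D i j)" for i
  proof -
    have sD: "(\<lambda>z. \<Sum>j<M. \<bar>pmf (P i) z - pmf (P j) z\<bar>) summable_on UNIV \<and>
        infsum (\<lambda>z. \<Sum>j<M. \<bar>pmf (P i) z - pmf (P j) z\<bar>) UNIV = (\<Sum>j<M. D i j)"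
      unfolding D_def by (rule infsum_finsum) (auto intro: tv_summable)
    have "infsum (\<lambda>z. \<bar>pmf (P i) z - R z\<bar>) UNIV \<le> infsum (\<lambda>z. (1 / real M) * (\<Sum>j<M. \<bar>pmf (P i) z - pmf (P j) z\<bar>)) UNIV"
    proof (rule infsum_mono[OF tvR])
      show "(\<lambda>z. (1 / real M) * (\<Sum>j<M. \<bar>pmf (P i) z - pmf (P j) z\<bar>)) summable_on UNIV"
        by (rule summable_on_cmult_right) (use sD in blast)
      fix z
      have "pmf (P i) z - R z = (1 / real M) * (\<Sum>j<M. pmf (P i) z - pmf (P j) z)"
        using M by (simp add: Rdef sum_subtractf field_simps)
      then have "\<bar>pmf (P i) z - R z\<bar> = (1 / real M) * \<bar>\<Sum>j<M. pmf (P i) z - pmf (P j) z\<bar>"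
        by (simp add: abs_mult)
      also have "\<dots> \<le> (1 / real M) * (\<Sum>j<M. \<bar>pmf (P i) z - pmf (P j) z\<bar>)"
        by (intro mult_left_mono sum_abs) auto
      finally show "\<bar>pmf (P i) z - R z\<bar> \<le> (1 / real M) * (\<Sum>j<M. \<bar>pmf (P i) z - pmf (P j) z\<bar>)" .
    qed
    also have "\<dots> = (1 / real M) * (\<Sum>j<M. D i j)" by (subst infsum_cmult_right') (use sD in simp)
    finally show ?thesis .
  qed
  define S where "S = (\<Sum>i<M. \<Sum>j\<in>{..<M} - {i}. D i j)"
  have S0: "0 \<le> S" unfolding S_def by (intro sum_nonneg D0)
  have SS: "(\<Sum>i<M. \<Sum>j<M. D i j) = S"
  proof -
    have "(\<Sum>j<M. D i j) = (\<Sum>j\<in>{..<M} - {i}. D i j)" if "i < M" for i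
      using that by (simp add: sum_diff1 Dii)
    then show ?thesis unfolding S_def by simp
  qed
  have dE: "d_E V \<Phi> = (1 / (real M * (real M - 1))) * S"
    unfolding d_E_def S_def D_def P_def M_def ..
  have "I_E V \<Phi> = (\<Sum>i<M. (1 / real M) * kl_div (P i) R)"
    unfolding I_E_def M_def P_def R_def ..
  also have "\<dots> \<le> (\<Sum>i<M. (1 / real M) * (B * ((1 / real M) * (\<Sum>j<M. D i j))))"
    using B1 by (intro sum_mono mult_left_mono order_trans[OF kl] tvPR) auto
  also have "\<dots> = B / (real M * real M) * S"
    by (simp add: SS[symmetric] sum_distrib_left)
  also have "\<dots> \<le> B * d_E V \<Phi>"
  proof (cases "M = 1")
    case True
    then have "S = 0" unfolding S_def by (simp add: Dii)
    then show ?thesis by (simp add: dE)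
  next
    case False
    then have M2: "2 \<le> M" using M by simp
    have "1 / (real M * real M) \<le> 1 / (real M * (real M - 1))"
      using M2 by (intro divide_left_mono mult_left_mono) auto
    then have "1 / (real M * real M) * S \<le> 1 / (real M * (real M - 1)) * S" using S0 by (rule mult_right_mono)
    then have "B * (1 / (real M * real M) * S) \<le> B * (1 / (real M * (real M - 1)) * S)" using B1 by (intro mult_left_mono) auto
    then show ?thesis unfolding dE by simp
  qed
  finally show ?thesis by (simp add: B_def M_def)
qed

lemma spec_F_bounds: "0 \<le> spec_F W p n a" "spec_F W p n a \<le> 1"
  unfolding spec_F_def by auto

lemma spec_F_mono: "b' \<le> b \<Longrightarrow> spec_F W p n b \<le> spec_F W p n b'"
  unfolding spec_F_def by (rule measure_pmf.finite_measure_mono) auto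

lemma spec_F_const: "spec_F (\<lambda>_. W n) (\<lambda>_. p n) n a = spec_F W p n a"
  unfolding spec_F_def ..

lemma spec_F_lower:
  assumes "0 < n" "b < 0"
  shows "1 - exp (real n * b) \<le> spec_F W p n b"
proof -
  have "1 - spec_F W p n b = measure_pmf.expectation (p n) (\<lambda>x. measure_pmf.prob (W n x) {y. \<not> b < dens (W n) (p n) n x y})"
    using exp_compl_spec[of "p n" "W n" b n] spec_F_const[of W n p b] by simp
  also have "\<dots> \<le> exp (real n * b)"
  proof (rule exp_le_const[where B=1])
    fix x
    show "\<bar>measure_pmf.prob (W n x) {y. \<not> b < dens (W n) (p n) n x y}\<bar> \<le> 1" by simp
    show "measure_pmf.prob (W n x) {y. \<not> b < dens (W n) (p n) n x y} \<le> exp (real n * b)"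
    proof (rule prob_change_measure[where R="out_dist (W n) (p n)"])
      fix y assume y: "y \<in> {y. \<not> b < dens (W n) (p n) n x y}"
      show "pmf (W n x) y \<le> exp (real n * b) * pmf (out_dist (W n) (p n)) y"
      proof (cases "pmf (W n x) y = 0")
        case True then show ?thesis by simp
      next
        case False
        then have w: "0 < pmf (W n x) y" using pmf_nonneg[of "W n x" y] by linarith
        show ?thesis
        proof (cases "pmf (out_dist (W n) (p n)) y = 0")
          case True
          then have "dens (W n) (p n) n x y = 0" by (simp add: dens_def)
          then show ?thesis using y assms by simp
        next
          case False
          then have q: "0 < pmf (out_dist (W n) (p n)) y" using pmf_nonneg[of "out_dist (W n) (p n)" y] by linarith
          show ?thesis using dens_small[OF w q, of "real n" b] y assms by (simp add: dens_def)
        qed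
      qed
    qed simp
  qed
  finally show ?thesis by simp
qed

lemma exp_neg_lim: "0 < g \<Longrightarrow> (\<lambda>n. exp (- (real n * g))) \<longlonglongrightarrow> 0"
  by real_asymp

lemma I_sup_nonneg: "0 \<le> I_sup 0 p W"
  unfolding I_sup_def
proof (rule Inf_greatest, clarsimp)
  fix b assume b: "limsup (\<lambda>n. ereal (spec_F W p n b)) \<le> ereal 0"
  show "0 \<le> b"
  proof (rule ccontr)
    assume "\<not> 0 \<le> b"
    then have bn: "b < 0" by simp
    have "(\<lambda>n. ereal (1 - exp (real n * b))) \<longlonglongrightarrow> 1"
    proof -
      have "(\<lambda>n. exp (- (real n * (- b)))) \<longlonglongrightarrow> 0" using bn by (intro exp_neg_lim) simp
      then have "(\<lambda>n. 1 - exp (real n * b)) \<longlonglongrightarrow> 1 - 0" by (intro tendsto_diff) simp_all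
      then have "(\<lambda>n. ereal (1 - exp (real n * b))) \<longlonglongrightarrow> ereal 1" by (intro tendsto_ereal) simp
      then show ?thesis unfolding one_ereal_def .
    qed
    then have "liminf (\<lambda>n. ereal (1 - exp (real n * b))) = 1" by (intro lim_imp_Liminf) simp_all
    moreover have "liminf (\<lambda>n. ereal (1 - exp (real n * b))) \<le> liminf (\<lambda>n. ereal (spec_F W p n b))"
      by (intro Liminf_mono eventually_mono[OF eventually_gt_at_top[of 0]]) (use spec_F_lower bn in auto)
    moreover have "liminf (\<lambda>n. ereal (spec_F W p n b)) \<le> limsup (\<lambda>n. ereal (spec_F W p n b))"
      by (rule Liminf_le_Limsup) simp
    ultimately have "(1::ereal) \<le> ereal 0" using b by (metis order_trans)
    then show False by simp
  qed
qed

lemma lim_F_to_1: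
  assumes "ereal a < I_inf 1 p W"
  shows "(\<lambda>n. spec_F W p n a) \<longlonglongrightarrow> 1"
proof -
  have "\<not> liminf (\<lambda>n. ereal (spec_F W p n a)) < 1"
  proof
    assume "liminf (\<lambda>n. ereal (spec_F W p n a)) < 1"
    then have "I_inf 1 p W \<le> ereal a" unfolding I_inf_def by (intro Inf_lower) auto
    then show False using assms by simp
  qed
  then have li: "1 \<le> liminf (\<lambda>n. ereal (spec_F W p n a))" by simp
  have ls: "limsup (\<lambda>n. ereal (spec_F W p n a)) \<le> 1"
    by (rule Limsup_bounded) (simp add: spec_F_bounds)
  have "liminf (\<lambda>n. ereal (spec_F W p n a)) \<le> limsup (\<lambda>n. ereal (spec_F W p n a))"
    by (rule Liminf_le_Limsup) simp
  then have "(\<lambda>n. ereal (spec_F W p n a)) \<longlonglongrightarrow> 1"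
    using li ls by (intro Liminf_eq_Limsup) auto
  then have "(\<lambda>n. ereal (spec_F W p n a)) \<longlonglongrightarrow> ereal 1" unfolding one_ereal_def .
  then show ?thesis by (simp only: lim_ereal)
qed

lemma lim_F_to_0:
  assumes "I_sup 0 p W < ereal b"
  shows "(\<lambda>n. spec_F W p n b) \<longlonglongrightarrow> 0"
proof -
  obtain b' where b': "b' < b" "limsup (\<lambda>n. ereal (spec_F W p n b')) \<le> ereal 0"
    using assms unfolding I_sup_def by (auto simp: Inf_less_iff)
  have ls: "limsup (\<lambda>n. ereal (spec_F W p n b)) \<le> 0"
  proof -
    have "limsup (\<lambda>n. ereal (spec_F W p n b)) \<le> limsup (\<lambda>n. ereal (spec_F W p n b'))"
      by (intro Limsup_mono always_eventually allI) (use spec_F_mono[of b' b] b'(1) in auto)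
    then show ?thesis using b'(2) by (metis order_trans zero_ereal_def)
  qed
  have li: "0 \<le> liminf (\<lambda>n. ereal (spec_F W p n b))"
    by (rule Liminf_bounded) (simp add: spec_F_bounds)
  have "liminf (\<lambda>n. ereal (spec_F W p n b)) \<le> limsup (\<lambda>n. ereal (spec_F W p n b))"
    by (rule Liminf_le_Limsup) simp
  then have "(\<lambda>n. ereal (spec_F W p n b)) \<longlonglongrightarrow> 0"
    using li ls by (intro Liminf_eq_Limsup) auto
  then have "(\<lambda>n. ereal (spec_F W p n b)) \<longlonglongrightarrow> ereal 0" unfolding zero_ereal_def .
  then show ?thesis by (simp only: lim_ereal)
qed

lemma kl_lower:
  fixes P R Mr :: real
  assumes "0 \<le> P" "0 \<le> R" "P \<le> Mr * R"
  shows "P - R \<le> P * ln (P / R)"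
proof (cases "P = 0")
  case True then show ?thesis using assms by simp
next
  case False
  then have P: "0 < P" using assms by simp
  then have R: "0 < R" using assms by (cases "R = 0") auto
  have "ln (R / P) \<le> R / P - 1" using P R by (intro ln_le_minus_one) auto
  moreover have "ln (R / P) = - ln (P / R)" using P R by (simp add: ln_div)
  ultimately have "1 - R / P \<le> ln (P / R)" by simp
  then have "P * (1 - R / P) \<le> P * ln (P / R)" using P by (intro mult_left_mono) auto
  then show ?thesis using P by (simp add: algebra_simps)
qed

lemma I_E_nonneg:
  fixes V :: "'x \<Rightarrow> 'z pmf" and \<Phi> :: "('x, 'y) wtcode"
  assumes M1: "1 \<le> cM \<Phi>"
  shows "0 \<le> I_E V \<Phi>"
proof -
  define M where "M = cM \<Phi>"
  define P where "P i = out_dist V (cQ \<Phi> i)" for i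
  define R where "R = eve_mix V \<Phi>"
  have M: "1 \<le> M" using M1 by (simp add: M_def)
  have Rdef: "R z = (1 / real M) * (\<Sum>j<M. pmf (P j) z)" for z
    by (simp add: R_def eve_mix_def M_def P_def)
  have sumP: "(\<lambda>z. \<Sum>j<M. pmf (P j) z) summable_on UNIV \<and> infsum (\<lambda>z. \<Sum>j<M. pmf (P j) z) UNIV = (\<Sum>j<M. infsum (pmf (P j)) UNIV)"
    by (rule infsum_finsum) (auto intro: infsum_pmf(1))
  have sR: "R summable_on UNIV" unfolding Rdef[abs_def] by (rule summable_on_cmult_right) (use sumP in blast)
  have iR: "infsum R UNIV = 1"
    unfolding Rdef[abs_def] by (subst infsum_cmult_right') (use sumP M in \<open>simp add: infsum_pmf(2)\<close>)
  have R0: "0 \<le> R z" for z unfolding Rdef by (simp add: sum_nonneg)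
  have PR: "pmf (P i) z \<le> real M * R z" if "i < M" for i z
  proof -
    have "pmf (P i) z \<le> (\<Sum>j<M. pmf (P j) z)" using that by (intro member_le_sum) auto
    then show ?thesis using M by (simp add: Rdef)
  qed
  have kl: "0 \<le> kl_div (P i) R" if "i < M" for i
  proof (cases "(\<lambda>z. pmf (P i) z * ln (pmf (P i) z / R z)) summable_on UNIV")
    case True
    have sd: "(\<lambda>z. pmf (P i) z + (-1) * R z) summable_on UNIV"
      by (intro summable_on_add infsum_pmf(1) summable_on_cmult_right sR)
    have "infsum (\<lambda>z. pmf (P i) z + (-1) * R z) UNIV \<le> kl_div (P i) R"
      unfolding kl_div_def
      by (rule infsum_mono[OF sd True]) (use kl_lower[OF pmf_nonneg R0 PR[OF that]] in simp)
    moreover have "infsum (\<lambda>z. pmf (P i) z + (-1) * R z) UNIV = 0"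
      by (subst infsum_add[OF infsum_pmf(1)], intro summable_on_cmult_right sR) (simp only: infsum_cmult_right', simp add: infsum_pmf(2) iR)
    ultimately show ?thesis by simp
  next
    case False
    then show ?thesis unfolding kl_div_def by (simp add: infsum_not_exists)
  qed
  have "0 \<le> (\<Sum>i<M. (1 / real M) * kl_div (P i) R)"
    by (intro sum_nonneg mult_nonneg_nonneg kl) auto
  then show ?thesis unfolding I_E_def M_def P_def R_def .
qed

definition triv_code :: "('x, 'y) wtcode" where
  "triv_code = \<lparr>cM = 1, cQ = (\<lambda>_. return_pmf undefined), cD = (\<lambda>_. UNIV)\<rparr>"

lemma triv_code_props:
  fixes V :: "'x \<Rightarrow> 'z pmf" and W :: "'x \<Rightarrow> 'y pmf"
  shows
  "valid_code (triv_code :: ('x, 'y) wtcode)" "eps_B W (triv_code :: ('x, 'y) wtcode) = 0" "d_E V (triv_code :: ('x, 'y) wtcode) = 0" "I_E V (triv_code :: ('x, 'y) wtcode) = 0" "cM (triv_code :: ('x, 'y) wtcode) = 1"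
proof -
  show "valid_code (triv_code :: ('x, 'y) wtcode)" "cM (triv_code :: ('x, 'y) wtcode) = 1" by (auto simp: valid_code_def triv_code_def)
  show "eps_B W (triv_code :: ('x, 'y) wtcode) = 0" by (simp add: eps_B_def triv_code_def)
  show "d_E V (triv_code :: ('x, 'y) wtcode) = 0" by (simp add: d_E_def triv_code_def)
  have e: "(\<lambda>z. pmf (out_dist V (return_pmf undefined)) z * ln (pmf (out_dist V (return_pmf undefined)) z / pmf (out_dist V (return_pmf undefined)) z)) = (\<lambda>z. 0)"
    by (rule ext, case_tac "pmf (out_dist V (return_pmf undefined)) z = 0") auto
  have "kl_div (out_dist V (return_pmf undefined)) (pmf (out_dist V (return_pmf undefined))) = 0"
    unfolding kl_div_def e by simp
  moreover have "eve_mix V (triv_code :: ('x, 'y) wtcode) = pmf (out_dist V (return_pmf undefined))"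
    by (simp add: eve_mix_def triv_code_def fun_eq_iff)
  moreover have "I_E V (triv_code :: ('x, 'y) wtcode) = kl_div (out_dist V (return_pmf undefined)) (eve_mix V (triv_code :: ('x, 'y) wtcode))"
    by (simp add: I_E_def triv_code_def)
  ultimately show "I_E V (triv_code :: ('x, 'y) wtcode) = 0" by simp
qed

lemma ceil_facts:
  fixes x :: real
  assumes "1 \<le> x"
  shows "1 \<le> nat \<lceil>x\<rceil>" "x \<le> real (nat \<lceil>x\<rceil>)" "real (nat \<lceil>x\<rceil>) \<le> 2 * x"
proof -
  show "x \<le> real (nat \<lceil>x\<rceil>)" by (rule real_nat_ceiling_ge)
  then show "1 \<le> nat \<lceil>x\<rceil>" using assms by linarith
  have "0 \<le> \<lceil>x\<rceil>" using assms by linarith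
  then have "real (nat \<lceil>x\<rceil>) = of_int \<lceil>x\<rceil>" by simp
  also have "\<dots> \<le> x + 1" by (rule of_int_ceiling_le_add_one)
  finally show "real (nat \<lceil>x\<rceil>) \<le> 2 * x" using assms by linarith
qed

lemma eps_B_nonneg: "1 \<le> cM \<Phi> \<Longrightarrow> 0 \<le> eps_B W \<Phi>"
  unfolding eps_B_def by (intro mult_nonneg_nonneg sum_nonneg) auto

lemma d_E_nonneg: "1 \<le> cM \<Phi> \<Longrightarrow> 0 \<le> d_E V \<Phi>"
  unfolding d_E_def by (intro mult_nonneg_nonneg sum_nonneg infsum_nonneg) auto

lemma main_seq:
  fixes WB :: "nat \<Rightarrow> 'x \<Rightarrow> 'y pmf" and WE :: "nat \<Rightarrow> 'x \<Rightarrow> 'z pmf" and p :: "nat \<Rightarrow> 'x pmf"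
  assumes R: "0 < R" and g: "0 < g" and b: "0 \<le> b" and ab: "R + b + 2 * g \<le> a"
    and FB: "(\<lambda>n. spec_F WB p n a) \<longlonglongrightarrow> 1" and FE: "(\<lambda>n. spec_F WE p n b) \<longlonglongrightarrow> 0"
  shows "\<exists>\<Phi> :: nat \<Rightarrow> ('x, 'y) wtcode. (\<forall>n. valid_code (\<Phi> n)) \<and>
           (\<lambda>n. eps_B (WB n) (\<Phi> n)) \<longlonglongrightarrow> 0 \<and>
           (\<lambda>n. d_E (WE n) (\<Phi> n)) \<longlonglongrightarrow> 0 \<and>
           (\<lambda>n. I_E (WE n) (\<Phi> n) / real n) \<longlonglongrightarrow> 0 \<and>
           ereal R \<le> liminf (\<lambda>n. ereal (ln (real (cM (\<Phi> n))) / real n))"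
proof -
  have a0: "0 \<le> a" using R b g ab by linarith
  define Mn where "Mn n = nat \<lceil>exp (real n * R)\<rceil>" for n
  define Ln where "Ln n = nat \<lceil>exp (real n * (b + g))\<rceil>" for n
  define rn where "rn n = exp (- (real n * (g / 2)))" for n
  define G where "G n = (\<lambda>x y. a < dens (WB n) (p n) n x y)" for n
  have e1: "1 \<le> exp (real n * R)" for n using R by simp
  have e2: "1 \<le> exp (real n * (b + g))" for n using b g by simp
  note M = ceil_facts[OF e1]
  note L = ceil_facts[OF e2]
  have M1: "1 \<le> Mn n" for n unfolding Mn_def by (rule M(1))
  have L1: "1 \<le> Ln n" for n unfolding Ln_def by (rule L(1))
  have r0: "0 < rn n" for n unfolding rn_def by simp
  define \<beta> where "\<beta> n = (1 - spec_F WB p n a) + 4 * exp (- (real n * g)) + 3 * exp (- (real n * (g / 2))) + 4 * spec_F WE p n b" for n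
  have "\<forall>n. \<exists>h. 0 < n \<longrightarrow> eps_B (WB n) (mkcode (Mn n) (Ln n) (G n) h) + d_E (WE n) (mkcode (Mn n) (Ln n) (G n) h) \<le> \<beta> n"
  proof (intro allI)
    fix n :: nat
    show "\<exists>h. 0 < n \<longrightarrow> eps_B (WB n) (mkcode (Mn n) (Ln n) (G n) h) + d_E (WE n) (mkcode (Mn n) (Ln n) (G n) h) \<le> \<beta> n"
    proof (cases "0 < n")
      case False then show ?thesis by simp
    next
      case True
      obtain h where h: "eps_B (WB n) (mkcode (Mn n) (Ln n) (G n) h) + d_E (WE n) (mkcode (Mn n) (Ln n) (G n) h)
         \<le> (1 - spec_F (\<lambda>_. WB n) (\<lambda>_. p n) n a) + real (Mn n) * real (Ln n) * exp (- real n * a)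
          + 2 * (exp (real n * b) / (2 * rn n * real (Ln n)) + rn n / 2 + 2 * spec_F (\<lambda>_. WE n) (\<lambda>_. p n) n b) + rn n"
        using code_exists[where W="WB n" and p="p n" and V="WE n" and b=b, OF True M1 L1 a0 r0] unfolding G_def by blast
      have i1: "real (Mn n) * real (Ln n) * exp (- real n * a) \<le> 4 * exp (- (real n * g))"
      proof -
        have "real (Mn n) * real (Ln n) \<le> (2 * exp (real n * R)) * (2 * exp (real n * (b + g)))"
          unfolding Mn_def Ln_def by (intro mult_mono M(3) L(3)) (auto, smt (verit) exp_gt_zero)
        also have "\<dots> = 4 * exp (real n * (R + b + g))" by (simp add: exp_add[symmetric] algebra_simps)
        finally have "real (Mn n) * real (Ln n) * exp (- real n * a) \<le> 4 * exp (real n * (R + b + g)) * exp (- real n * a)"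
          by (intro mult_right_mono) auto
        also have "\<dots> = 4 * exp (real n * (R + b + g - a))" by (simp add: exp_add[symmetric] algebra_simps)
        also have "\<dots> \<le> 4 * exp (- (real n * g))"
        proof -
          have "real n * (R + b + g - a) \<le> real n * (- g)" using ab by (intro mult_left_mono) auto
          then show ?thesis by simp
        qed
        finally show ?thesis .
      qed
      have i2: "exp (real n * b) / (2 * rn n * real (Ln n)) \<le> exp (- (real n * (g / 2))) / 2"
      proof -
        have "exp (real n * (b + g / 2)) = rn n * exp (real n * (b + g))"
          unfolding rn_def by (simp add: exp_add[symmetric] algebra_simps)
        also have "\<dots> \<le> rn n * real (Ln n)" unfolding Ln_def using r0[of n] by (intro mult_left_mono L(2)) auto
        finally have le: "exp (real n * (b + g / 2)) \<le> rn n * real (Ln n)" .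
        have pos: "0 < rn n * real (Ln n)" using r0[of n] L1[of n] by simp
        have "exp (real n * b) / (2 * rn n * real (Ln n)) \<le> exp (real n * b) / (2 * exp (real n * (b + g / 2)))"
          using le pos mult_pos_pos[OF pos exp_gt_zero[of "real n * (b + g / 2)"]] by (intro divide_left_mono) (auto simp: mult.assoc)
        also have "\<dots> = exp (- (real n * (g / 2))) / 2" by (simp add: exp_add[symmetric] exp_diff[symmetric] algebra_simps exp_minus field_simps)
        finally show ?thesis .
      qed
      have "eps_B (WB n) (mkcode (Mn n) (Ln n) (G n) h) + d_E (WE n) (mkcode (Mn n) (Ln n) (G n) h) \<le> \<beta> n"
        using h i1 i2 unfolding spec_F_const \<beta>_def rn_def by argo
      then show ?thesis by blast
    qed
  qed
  then obtain H where H: "\<And>n. 0 < n \<Longrightarrow> eps_B (WB n) (mkcode (Mn n) (Ln n) (G n) (H n)) + d_E (WE n) (mkcode (Mn n) (Ln n) (G n) (H n)) \<le> \<beta> n"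
    by metis
  define \<Phi> where "\<Phi> n = mkcode (Mn n) (Ln n) (G n) (H n)" for n
  have valid: "\<forall>n. valid_code (\<Phi> n)" unfolding \<Phi>_def using M1 by (auto intro: mkcode_valid)
  have cM: "cM (\<Phi> n) = Mn n" for n unfolding \<Phi>_def by simp
  have beta0: "\<beta> \<longlonglongrightarrow> 0"
  proof -
    have "(\<lambda>n. (1 - spec_F WB p n a) + 4 * exp (- (real n * g)) + 3 * exp (- (real n * (g / 2))) + 4 * spec_F WE p n b)
          \<longlonglongrightarrow> (1 - 1) + 4 * 0 + 3 * 0 + 4 * 0"
      by (intro tendsto_add tendsto_diff tendsto_mult tendsto_const FB FE exp_neg_lim) (use g in auto)
    then show ?thesis unfolding \<beta>_def[abs_def] by simp
  qed
  have epsle: "\<forall>\<^sub>F n in sequentially. eps_B (WB n) (\<Phi> n) \<le> \<beta> n"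
    using eventually_gt_at_top[of 0]
  proof eventually_elim
    case (elim n)
    then show ?case using H[OF elim] d_E_nonneg[of "\<Phi> n" "WE n"] M1[of n] unfolding \<Phi>_def by simp
  qed
  have dEle: "\<forall>\<^sub>F n in sequentially. d_E (WE n) (\<Phi> n) \<le> \<beta> n"
    using eventually_gt_at_top[of 0]
  proof eventually_elim
    case (elim n)
    then show ?case using H[OF elim] eps_B_nonneg[of "\<Phi> n" "WB n"] M1[of n] unfolding \<Phi>_def by simp
  qed
  have eps0: "(\<lambda>n. eps_B (WB n) (\<Phi> n)) \<longlonglongrightarrow> 0"
    by (rule tendsto_sandwich[OF _ epsle tendsto_const beta0]) (intro always_eventually allI eps_B_nonneg, use M1 in \<open>simp add: cM\<close>)
  have dE0: "(\<lambda>n. d_E (WE n) (\<Phi> n)) \<longlonglongrightarrow> 0"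
    by (rule tendsto_sandwich[OF _ dEle tendsto_const beta0]) (intro always_eventually allI d_E_nonneg, use M1 in \<open>simp add: cM\<close>)
  have IE0: "(\<lambda>n. I_E (WE n) (\<Phi> n) / real n) \<longlonglongrightarrow> 0"
  proof (rule tendsto_sandwich[where f="\<lambda>_. 0" and h="\<lambda>n. (2 + R) * d_E (WE n) (\<Phi> n)"])
    show "\<forall>\<^sub>F n in sequentially. 0 \<le> I_E (WE n) (\<Phi> n) / real n"
      by (intro always_eventually allI divide_nonneg_nonneg I_E_nonneg) (use M1 in \<open>simp_all add: cM\<close>)
    show "\<forall>\<^sub>F n in sequentially. I_E (WE n) (\<Phi> n) / real n \<le> (2 + R) * d_E (WE n) (\<Phi> n)"
      using eventually_gt_at_top[of 0]
    proof eventually_elim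
      case (elim n)
      have d0: "0 \<le> d_E (WE n) (\<Phi> n)" by (rule d_E_nonneg) (use M1 in \<open>simp add: cM\<close>)
      have n1: "1 \<le> real n" using elim by simp
      have "ln (real (Mn n)) \<le> ln (2 * exp (real n * R))"
        unfolding Mn_def using M(3) M1[of n] unfolding Mn_def by (subst ln_le_cancel_iff) auto
      also have "\<dots> = ln 2 + real n * R" by (simp add: ln_mult)
      also have "\<dots> \<le> 1 + real n * R" using ln_2_less_1 by simp
      finally have "max 1 (ln (real (Mn n))) \<le> 1 + real n * R" using R by simp
      also have "\<dots> \<le> real n * (2 + R)" using n1 R by (simp add: algebra_simps)
      finally have mx: "max 1 (ln (real (Mn n))) \<le> real n * (2 + R)" .
      have "I_E (WE n) (\<Phi> n) \<le> max 1 (ln (real (Mn n))) * d_E (WE n) (\<Phi> n)"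
        using I_E_le[of "\<Phi> n" "WE n"] M1[of n] cM[of n] by simp
      also have "\<dots> \<le> real n * (2 + R) * d_E (WE n) (\<Phi> n)" by (rule mult_right_mono[OF mx d0])
      finally show ?case using elim by (simp add: field_simps)
    qed
    show "(\<lambda>n. (2 + R) * d_E (WE n) (\<Phi> n)) \<longlonglongrightarrow> 0"
      using tendsto_mult[OF tendsto_const dE0, of "2 + R"] by simp
  qed simp
  have rate: "ereal R \<le> liminf (\<lambda>n. ereal (ln (real (cM (\<Phi> n))) / real n))"
  proof (rule Liminf_bounded)
    show "\<forall>\<^sub>F n in sequentially. ereal R \<le> ereal (ln (real (cM (\<Phi> n))) / real n)"
      using eventually_gt_at_top[of 0]
    proof eventually_elim
      case (elim n)
      have "real n * R = ln (exp (real n * R))" by simp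
      also have "\<dots> \<le> ln (real (Mn n))" using M(2)[of n] by (subst ln_le_cancel_iff) (auto simp: Mn_def)
      finally show ?case using elim by (simp add: cM field_simps)
    qed
  qed
  show ?thesis using valid eps0 dE0 IE0 rate by blast
qed

lemma C_lower:
  fixes WB :: "nat \<Rightarrow> 'x \<Rightarrow> 'y pmf" and WE :: "nat \<Rightarrow> 'x \<Rightarrow> 'z pmf"
  assumes "\<forall>n. valid_code (\<Phi> n)" "(\<lambda>n. eps_B (WB n) (\<Phi> n)) \<longlonglongrightarrow> 0"
    "(\<lambda>n. d_E (WE n) (\<Phi> n)) \<longlonglongrightarrow> 0" "(\<lambda>n. I_E (WE n) (\<Phi> n) / real n) \<longlonglongrightarrow> 0"
    "v \<le> liminf (\<lambda>n. ereal (ln (real (cM (\<Phi> n))) / real n))"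
  shows "v \<le> C_d WB WE" "v \<le> C_I WB WE"
proof -
  show "v \<le> C_d WB WE" unfolding C_d_def
    by (rule Sup_upper2[OF _ assms(5)]) (use assms in blast)
  show "v \<le> C_I WB WE" unfolding C_I_def
    by (rule Sup_upper2[OF _ assms(5)]) (use assms in blast)
qed

lemma C_nonneg:
  fixes WB :: "nat \<Rightarrow> 'x \<Rightarrow> 'y pmf" and WE :: "nat \<Rightarrow> 'x \<Rightarrow> 'z pmf"
  shows "0 \<le> C_d WB WE" "0 \<le> C_I WB WE"
proof -
  define \<Phi> where "\<Phi> = (\<lambda>n::nat. triv_code :: ('x, 'y) wtcode)"
  have a: "\<forall>n. valid_code (\<Phi> n)" "(\<lambda>n. eps_B (WB n) (\<Phi> n)) \<longlonglongrightarrow> 0"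
    "(\<lambda>n. d_E (WE n) (\<Phi> n)) \<longlonglongrightarrow> 0" "(\<lambda>n. I_E (WE n) (\<Phi> n) / real n) \<longlonglongrightarrow> 0"
    unfolding \<Phi>_def by (simp_all add: triv_code_props)
  have b: "0 \<le> liminf (\<lambda>n. ereal (ln (real (cM (\<Phi> n))) / real n))"
    unfolding \<Phi>_def by (simp add: triv_code_props zero_ereal_def[symmetric] Liminf_const)
  show "0 \<le> C_d WB WE" "0 \<le> C_I WB WE" using C_lower[OF a b] by auto
qed

theorem lemma5:
  fixes WB :: "nat \<Rightarrow> 'x \<Rightarrow> 'y pmf" and WE :: "nat \<Rightarrow> 'x \<Rightarrow> 'z pmf"
    and p :: "nat \<Rightarrow> 'x pmf"
  assumes defined: "\<not> (I_inf 1 p WB = \<infinity> \<and> I_sup 0 p WE = \<infinity>)"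
                   "\<not> (I_inf 1 p WB = -\<infinity> \<and> I_sup 0 p WE = -\<infinity>)"
  shows "I_inf 1 p WB - I_sup 0 p WE \<le> C_d WB WE \<and>
         (\<forall>(d::nat) (Zs :: nat \<Rightarrow> 'z set).
           d > 0 \<and>
           (\<forall>n\<ge>1. finite (Zs n) \<and> card (Zs n) = d ^ n \<and>
                    (\<forall>x. set_pmf (WE n x) \<subseteq> Zs n)) \<longrightarrow>
           I_inf 1 p WB - I_sup 0 p WE \<le> C_I WB WE)"
proof -
  define X where "X = I_inf 1 p WB"
  define Y where "Y = I_sup 0 p WE"
  have Y0: "0 \<le> Y" unfolding Y_def by (rule I_sup_nonneg)
  have K: "ereal R \<le> C_d WB WE \<and> ereal R \<le> C_I WB WE" if R: "0 < R" "ereal R < X - Y" for R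
  proof -
    have Yfin: "Y \<noteq> \<infinity>"
    proof
      assume Yi: "Y = \<infinity>"
      then have "X \<noteq> \<infinity>" using defined(1) unfolding X_def Y_def by auto
      then have "X - Y = -\<infinity>" using Yi by (cases X) auto
      then show False using R(2) by simp
    qed
    then obtain y where y: "Y = ereal y" "0 \<le> y" using Y0 by (cases Y) auto
    have Xy: "ereal (R + y) < X" using R(2) y(1) by (cases X) auto
    obtain a b g where abg: "0 < g" "0 \<le> b" "Y < ereal b" "ereal a < X" "R + b + 2 * g \<le> a"
    proof (cases X)
      case (real x)
      define \<delta> where "\<delta> = (x - y - R) / 4"
      have d: "0 < \<delta>" using Xy real by (simp add: \<delta>_def)
      show ?thesis
        by (rule that[of "\<delta> / 2" "y + \<delta>" "x - \<delta>"]) (use d y real Xy in \<open>auto simp: \<delta>_def field_simps\<close>)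
    next
      case PInf
      show ?thesis by (rule that[of 1 "y + 1" "R + y + 3"]) (use y PInf in auto)
    next
      case MInf
      then show ?thesis using Xy by simp
    qed
    have FB: "(\<lambda>n. spec_F WB p n a) \<longlonglongrightarrow> 1" by (rule lim_F_to_1) (use abg(4) in \<open>simp add: X_def\<close>)
    have FE: "(\<lambda>n. spec_F WE p n b) \<longlonglongrightarrow> 0" by (rule lim_F_to_0) (use abg(3) in \<open>simp add: Y_def\<close>)
    obtain \<Phi> :: "nat \<Rightarrow> ('x, 'y) wtcode" where \<Phi>: "\<forall>n. valid_code (\<Phi> n)"
      "(\<lambda>n. eps_B (WB n) (\<Phi> n)) \<longlonglongrightarrow> 0" "(\<lambda>n. d_E (WE n) (\<Phi> n)) \<longlonglongrightarrow> 0"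
      "(\<lambda>n. I_E (WE n) (\<Phi> n) / real n) \<longlonglongrightarrow> 0"
      "ereal R \<le> liminf (\<lambda>n. ereal (ln (real (cM (\<Phi> n))) / real n))"
      using main_seq[OF R(1) abg(1,2,5) FB FE] by blast
    show ?thesis using C_lower[OF \<Phi>] by simp
  qed
  have main: "X - Y \<le> C" if C: "C = C_d WB WE \<or> C = C_I WB WE" for C
  proof (rule dense_le)
    fix w assume w: "w < X - Y"
    have C0: "0 \<le> C" using C C_nonneg[of WB WE] by auto
    show "w \<le> C"
    proof (cases w)
      case (real R)
      show ?thesis
      proof (cases "0 < R")
        case True
        then show ?thesis using K[OF True] w real C by auto
      next
        case False
        then show ?thesis using C0 real by (metis ereal_less_eq(3) order_trans linorder_not_less zero_ereal_def)
      qed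
    next
      case PInf
      then show ?thesis using w by simp
    next
      case MInf
      then show ?thesis by simp
    qed
  qed
  show ?thesis using main unfolding X_def Y_def by blast
qed

end
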